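(* Let $\alpha \in (0,1)$ and let $\gamma_n = \alpha n$ for each $n$. Let $K:\mathbb{N}_0 \to \mathbb{N}_0$, $n \mapsto K_n$, be a scaling such that for some constant $c>0$, \[ K_n \sim c \cdot r_1(\alpha,n), \qquad \text{where } r_1(\alpha,n) = \frac{\log n}{1-\alpha-\log \alpha}. \] Let $P(n,K_n,\gamma_n)$ denote the probability that the graph $\mathbb{H}(n;K_n,\gamma_n)$ is connected. Then \[ \lim_{n\to\infty} P(n,K_n,\gamma_n) = \begin{cases} 1, & \text{if } c>1,\\ 0, & \text{if } 0<c<1.\end{cases} \]
   Context: Random K-out graph $\mathbb{H}(n;K_n)$: on vertex set $V=\{v_1,\dots,v_n\}$ with labels $\mathcal{N}=\{1,\dots,n\}$, each node $v_i$ independently selects a set $\Gamma_{n,i}\subseteq \mathcal{N}\setminus\{i\}$ of $K_n$ distinct labels uniformly at random (the sets $\Gamma_{n,1},\dots,\Gamma_{n,n}$ are mutually independent). Distinct nodes $v_i,v_j$ are adjacent if $j\in\Gamma_{n,i}$ or $i\in\Gamma_{n,j}$ (undirected graph). The graph $\mathbb{H}(n;K_n,\gamma_n)$ is obtained by choosing a set $D\subset V$ of $\gamma_n$ nodes uniformly at random and deleting them: it has vertex set $R=V\setminus D$, and two distinct vertices of $R$ are adjacent iff they are adjacent in $\mathbb{H}(n;K_n)$. $\log$ is the natural logarithm; $a_n\sim b_n$ means $a_n/b_n\to 1$. All limits are as $n\to\infty$. *)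

theory Defs
  imports "HOL-Probability.Probability" "HOL-Library.Landau_Symbols" "HOL-Library.FuncSet"
begin

text \<open>Sample space of H(n;K,g): each node i in {1..n} chooses a K-subset of {1..n}-{i};
  independently a set D of g deleted labels is chosen. Independent uniform choices
  = uniform distribution on the product set.\<close>
definition kout_space :: "nat \<Rightarrow> nat \<Rightarrow> nat \<Rightarrow> ((nat \<Rightarrow> nat set) \<times> nat set) set" where
  "kout_space n K g =
     (PiE {1..n} (\<lambda>i. {S. S \<subseteq> {1..n} - {i} \<and> card S = K}))
     \<times> {D. D \<subseteq> {1..n} \<and> card D = g}"

definition kout_adj :: "(nat \<Rightarrow> nat set) \<Rightarrow> nat \<Rightarrow> nat \<Rightarrow> bool" where
  "kout_adj \<Gamma> i j \<longleftrightarrow> i \<noteq> j \<and> (j \<in> \<Gamma> i \<or> i \<in> \<Gamma> j)"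

definition connected_on :: "nat set \<Rightarrow> (nat \<Rightarrow> nat \<Rightarrow> bool) \<Rightarrow> bool" where
  "connected_on R E \<longleftrightarrow>
     (\<forall>u\<in>R. \<forall>v\<in>R. (u, v) \<in> {(x, y). x \<in> R \<and> y \<in> R \<and> E x y}\<^sup>*)"

definition P_conn :: "nat \<Rightarrow> nat \<Rightarrow> nat \<Rightarrow> real" where
  "P_conn n K g = measure_pmf.prob (pmf_of_set (kout_space n K g))
      {\<omega>. connected_on ({1..n} - snd \<omega>) (kout_adj (fst \<omega>))}"

end

theory Submission
  imports Defs "HOL-Real_Asymp.Real_Asymp"
begin



lemma binom_ratio_eq:
  fixes p q K :: nat
  assumes "K \<le> p" "p \<le> q"
  shows "real (p choose K) / real (q choose K) = (\<Prod>i = 0..<K. real (p - i) / real (q - i))"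
proof -
  have "real (p choose K) / real (q choose K) =
     (\<Prod>i = 0..<K. real (p - i) / real (K - i)) / (\<Prod>i = 0..<K. real (q - i) / real (K - i))"
    using assms by (simp add: binomial_altdef_of_nat)
  also have "\<dots> = (\<Prod>i = 0..<K. (real (p - i) / real (K - i)) / (real (q - i) / real (K - i)))"
    by (simp add: prod_dividef)
  also have "\<dots> = (\<Prod>i = 0..<K. real (p - i) / real (q - i))"
    by (rule prod.cong) auto
  finally show ?thesis .
qed

lemma binom_ratio_le:
  fixes p q K :: nat
  assumes "p \<le> q" "0 < q"
  shows "real (p choose K) / real (q choose K) \<le> (real p / real q) ^ K"
proof (cases "K \<le> p")
  case False
  then show ?thesis by (simp add: binomial_eq_0)
next
  case True
  have "real (p choose K) / real (q choose K) = (\<Prod>i = 0..<K. real (p - i) / real (q - i))"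
    using binom_ratio_eq[OF True assms(1)] .
  also have "\<dots> \<le> (\<Prod>i = 0..<K. real p / real q)"
  proof (rule prod_mono)
    fix i assume "i \<in> {0..<K}"
    then have i: "i < K" by simp
    have qi: "real (q - i) > 0" using i True assms by simp
    have m: "real i * real p \<le> real i * real q" using assms by (intro mult_left_mono) auto
    have "real (p - i) * real q \<le> real p * real (q - i)"
      using i True assms m by (simp add: of_nat_diff algebra_simps)
    then show "0 \<le> real (p - i) / real (q - i) \<and> real (p - i) / real (q - i) \<le> real p / real q"
      using qi assms by (simp add: divide_simps)
  qed
  finally show ?thesis by simp
qed

lemma binom_ratio_ge:
  fixes p q K :: nat
  assumes "K \<le> p" "p \<le> q"
  shows "((real p - real K) / real q) ^ K \<le> real (p choose K) / real (q choose K)"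
proof (cases "q = 0")
  case True
  then show ?thesis using assms by simp
next
  case False
  have "((real p - real K) / real q) ^ K = (\<Prod>i = 0..<K. (real p - real K) / real q)" by simp
  also have "\<dots> \<le> (\<Prod>i = 0..<K. real (p - i) / real (q - i))"
  proof (rule prod_mono)
    fix i assume "i \<in> {0..<K}"
    then have i: "i < K" by simp
    have qi: "real (q - i) > 0" using i assms by simp
    have m: "real i * (real q - real p) \<le> real K * (real q - real i)"
      using i assms by (intro mult_mono) auto
    have "(real p - real K) * real (q - i) \<le> real (p - i) * real q"
      using i assms m by (simp add: of_nat_diff algebra_simps)
    then show "0 \<le> (real p - real K) / real q \<and> (real p - real K) / real q \<le> real (p - i) / real (q - i)"
      using qi assms False by (simp add: divide_simps)
  qed
  also have "\<dots> = real (p choose K) / real (q choose K)"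
    using binom_ratio_eq[OF assms] by simp
  finally show ?thesis .
qed

lemma card_PiE_sub:
  assumes "finite I" "\<And>i. i \<in> I \<Longrightarrow> A i \<subseteq> B i"
  shows "card {f \<in> PiE I B. \<forall>i\<in>I. f i \<in> A i} = (\<Prod>i\<in>I. card (A i))"
proof -
  have "{f \<in> PiE I B. \<forall>i\<in>I. f i \<in> A i} = PiE I A"
    using assms(2) by (auto simp: PiE_iff extensional_def)
  then show ?thesis using assms(1) by (simp add: card_PiE)
qed

lemma prob_PiE_sub:
  assumes "finite I" "\<And>i. i \<in> I \<Longrightarrow> A i \<subseteq> B i"
  shows "real (card {f \<in> PiE I B. \<forall>i\<in>I. f i \<in> A i}) / real (card (PiE I B))
        = (\<Prod>i\<in>I. real (card (A i)) / real (card (B i)))"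
  using assms by (simp add: card_PiE_sub card_PiE prod_dividef)

lemma prod_three:
  fixes f :: "nat \<Rightarrow> real"
  assumes "finite I" "S1 \<subseteq> I" "S2 \<subseteq> I" "S1 \<inter> S2 = {}"
    and "\<And>i. i \<in> S1 \<Longrightarrow> f i = a" "\<And>i. i \<in> S2 \<Longrightarrow> f i = b"
    and "\<And>i. i \<in> I - S1 - S2 \<Longrightarrow> f i = 1"
  shows "(\<Prod>i\<in>I. f i) = a ^ card S1 * b ^ card S2"
proof -
  have fin: "finite S1" "finite S2" using assms finite_subset by auto
  have "I = S1 \<union> (S2 \<union> (I - S1 - S2))" using assms by auto
  then have "(\<Prod>i\<in>I. f i) = (\<Prod>i\<in>S1 \<union> (S2 \<union> (I - S1 - S2)). f i)" by simp
  also have "\<dots> = (\<Prod>i\<in>S1. f i) * (\<Prod>i\<in>S2 \<union> (I - S1 - S2). f i)"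
    using assms fin by (intro prod.union_disjoint) auto
  also have "(\<Prod>i\<in>S2 \<union> (I - S1 - S2). f i) = (\<Prod>i\<in>S2. f i) * (\<Prod>i\<in>I - S1 - S2. f i)"
    using assms fin by (intro prod.union_disjoint) auto
  also have "(\<Prod>i\<in>S1. f i) = a ^ card S1" using assms by simp
  also have "(\<Prod>i\<in>S2. f i) = b ^ card S2" using assms by simp
  also have "(\<Prod>i\<in>I - S1 - S2. f i) = 1" using assms by (intro prod.neutral) auto
  finally show ?thesis by simp
qed





definition Bs :: "nat \<Rightarrow> nat \<Rightarrow> nat \<Rightarrow> nat set set" where
  "Bs n K i = {S. S \<subseteq> {1..n} - {i} \<and> card S = K}"
definition GG :: "nat \<Rightarrow> nat \<Rightarrow> (nat \<Rightarrow> nat set) set" where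
  "GG n K = PiE {1..n} (Bs n K)"
definition DD :: "nat \<Rightarrow> nat \<Rightarrow> nat set set" where
  "DD n g = {D. D \<subseteq> {1..n} \<and> card D = g}"

lemma kout_space_eq: "kout_space n K g = GG n K \<times> DD n g"
proof -
  have "Bs n K = (\<lambda>i. {S. S \<subseteq> {1..n} - {i} \<and> card S = K})" by (rule ext) (simp add: Bs_def)
  then show ?thesis by (simp add: kout_space_def GG_def DD_def)
qed

lemma finite_Bs: "finite (Bs n K i)"
  unfolding Bs_def by (rule finite_subset[of _ "Pow {1..n}"]) auto

lemma finite_GG: "finite (GG n K)"
  unfolding GG_def by (intro finite_PiE finite_Bs) auto

lemma finite_DD: "finite (DD n g)"
  unfolding DD_def by (rule finite_subset[of _ "Pow {1..n}"]) auto

lemma card_sub_K: "finite X \<Longrightarrow> card {T. T \<subseteq> X \<and> card T = K} = card X choose K"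
  by (rule n_subsets)

lemma card_Bs: "i \<in> {1..n} \<Longrightarrow> card (Bs n K i) = (n - 1) choose K"
  unfolding Bs_def by (subst n_subsets) auto

lemma Bs_restrict: "{T \<in> Bs n K i. T \<inter> Y = {}} = {T. T \<subseteq> {1..n} - {i} - Y \<and> card T = K}"
  unfolding Bs_def by auto

lemma card_Bs_restrict: "card {T \<in> Bs n K i. T \<inter> Y = {}} = card ({1..n} - {i} - Y) choose K"
  unfolding Bs_restrict by (subst n_subsets) auto

lemma avg_bound:
  assumes ne1: "GG n K \<noteq> {}" and ne2: "DD n g \<noteq> {}"
    and bnd: "\<And>D. D \<in> DD n g \<Longrightarrow> real (card {\<Gamma> \<in> GG n K. Q \<Gamma> D}) \<le> \<epsilon> * real (card (GG n K))"
  shows "measure_pmf.prob (pmf_of_set (kout_space n K g)) {\<omega>. Q (fst \<omega>) (snd \<omega>)} \<le> \<epsilon>"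
proof -
  let ?\<Omega> = "kout_space n K g"
  have fin: "finite ?\<Omega>" by (simp add: kout_space_eq finite_GG finite_DD)
  have ne: "?\<Omega> \<noteq> {}" using ne1 ne2 by (simp add: kout_space_eq)
  have eq: "?\<Omega> \<inter> {\<omega>. Q (fst \<omega>) (snd \<omega>)} = (\<lambda>(D, \<Gamma>). (\<Gamma>, D)) ` (SIGMA D:DD n g. {\<Gamma> \<in> GG n K. Q \<Gamma> D})"
    by (auto simp: kout_space_eq image_iff)
  have inj: "inj_on (\<lambda>(D, \<Gamma>). (\<Gamma>, D)) X" for X :: "(nat set \<times> (nat \<Rightarrow> nat set)) set"
    by (auto simp: inj_on_def)
  have "card (?\<Omega> \<inter> {\<omega>. Q (fst \<omega>) (snd \<omega>)}) = (\<Sum>D\<in>DD n g. card {\<Gamma> \<in> GG n K. Q \<Gamma> D})"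
    unfolding eq by (subst card_image[OF inj]) (auto intro!: card_SigmaI finite_DD finite_GG)
  then have "real (card (?\<Omega> \<inter> {\<omega>. Q (fst \<omega>) (snd \<omega>)})) = (\<Sum>D\<in>DD n g. real (card {\<Gamma> \<in> GG n K. Q \<Gamma> D}))"
    by simp
  also have "\<dots> \<le> (\<Sum>D\<in>DD n g. \<epsilon> * real (card (GG n K)))"
    by (intro sum_mono bnd)
  also have "\<dots> = \<epsilon> * real (card ?\<Omega>)"
    by (simp add: kout_space_eq card_cartesian_product)
  finally have le: "real (card (?\<Omega> \<inter> {\<omega>. Q (fst \<omega>) (snd \<omega>)})) \<le> \<epsilon> * real (card ?\<Omega>)" .
  have pos: "real (card ?\<Omega>) > 0" using fin ne by (simp add: card_gt_0_iff)
  have "measure_pmf.prob (pmf_of_set ?\<Omega>) {\<omega>. Q (fst \<omega>) (snd \<omega>)} = real (card (?\<Omega> \<inter> {\<omega>. Q (fst \<omega>) (snd \<omega>)})) / real (card ?\<Omega>)"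
    using measure_pmf_of_set[OF ne fin] by simp
  also have "\<dots> \<le> \<epsilon>" using le pos by (simp add: divide_simps)
  finally show ?thesis .
qed





definition closedS :: "(nat \<Rightarrow> nat set) \<Rightarrow> nat set \<Rightarrow> nat set \<Rightarrow> bool" where
  "closedS \<Gamma> R S \<longleftrightarrow> (\<forall>i\<in>S. \<forall>j\<in>R - S. \<not> kout_adj \<Gamma> i j)"

lemma kout_adj_sym: "kout_adj \<Gamma> i j = kout_adj \<Gamma> j i"
  unfolding kout_adj_def by auto

lemma disc_closed:
  assumes "finite R" "\<not> connected_on R (kout_adj \<Gamma>)"
  shows "\<exists>S. S \<subseteq> R \<and> S \<noteq> {} \<and> 2 * card S \<le> card R \<and> closedS \<Gamma> R S"
proof -
  let ?E = "{(x,y). x \<in> R \<and> y \<in> R \<and> kout_adj \<Gamma> x y}"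
  obtain u v where uv: "u \<in> R" "v \<in> R" "(u,v) \<notin> ?E\<^sup>*"
    using assms(2) unfolding connected_on_def by blast
  define C where "C = {y. (u,y) \<in> ?E\<^sup>*}"
  have CR: "C \<subseteq> R"
  proof
    fix y assume "y \<in> C"
    then have "(u,y) \<in> ?E\<^sup>*" by (simp add: C_def)
    then show "y \<in> R" using uv(1) by (cases rule: rtranclE) auto
  qed
  have uC: "u \<in> C" by (simp add: C_def)
  have vC: "v \<notin> C" using uv(3) by (simp add: C_def)
  have cl1: "closedS \<Gamma> R C"
    unfolding closedS_def
  proof (intro ballI notI)
    fix i j assume i: "i \<in> C" and j: "j \<in> R - C" and a: "kout_adj \<Gamma> i j"
    have "(i,j) \<in> ?E" using i j a CR by auto
    then have "(u,j) \<in> ?E\<^sup>*" using i by (auto simp: C_def intro: rtrancl_into_rtrancl)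
    then show False using j by (simp add: C_def)
  qed
  have cl2: "closedS \<Gamma> R (R - C)"
    unfolding closedS_def
  proof (intro ballI notI)
    fix i j assume i: "i \<in> R - C" and j: "j \<in> R - (R - C)" and a: "kout_adj \<Gamma> i j"
    have "(j,i) \<in> ?E" using i j a kout_adj_sym by auto
    then have "(u,i) \<in> ?E\<^sup>*" using j by (auto simp: C_def intro: rtrancl_into_rtrancl)
    then show False using i by (simp add: C_def)
  qed
  have cs: "card C + card (R - C) = card R"
    using CR assms(1) by (metis card_Diff_subset finite_subset le_add_diff_inverse card_mono)
  show ?thesis
  proof (cases "2 * card C \<le> card R")
    case True
    then show ?thesis using CR uC cl1 by blast
  next
    case False
    then have "2 * card (R - C) \<le> card R" using cs by linarith
    moreover have "R - C \<noteq> {}" using uv(2) vC by blast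
    moreover have "R - C \<subseteq> R" by blast
    ultimately show ?thesis using cl2 by blast
  qed
qed

definition Acl :: "nat \<Rightarrow> nat \<Rightarrow> nat set \<Rightarrow> nat set \<Rightarrow> nat \<Rightarrow> nat set set" where
  "Acl n K R S l = (if l \<in> S then {T \<in> Bs n K l. T \<inter> (R - S) = {}}
     else if l \<in> R - S then {T \<in> Bs n K l. T \<inter> S = {}} else Bs n K l)"

lemma GG_memD: "\<Gamma> \<in> GG n K \<Longrightarrow> l \<in> {1..n} \<Longrightarrow> \<Gamma> l \<in> Bs n K l"
  unfolding GG_def by (auto simp: PiE_iff)

lemma closed_iff:
  assumes G: "\<Gamma> \<in> GG n K" and R: "R \<subseteq> {1..n}" and S: "S \<subseteq> R"
  shows "closedS \<Gamma> R S \<longleftrightarrow> (\<forall>l\<in>{1..n}. \<Gamma> l \<in> Acl n K R S l)"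
proof
  assume c: "closedS \<Gamma> R S"
  show "\<forall>l\<in>{1..n}. \<Gamma> l \<in> Acl n K R S l"
  proof
    fix l assume l: "l \<in> {1..n}"
    have B: "\<Gamma> l \<in> Bs n K l" using GG_memD[OF G l] .
    show "\<Gamma> l \<in> Acl n K R S l"
    proof (cases "l \<in> S")
      case True
      have "\<Gamma> l \<inter> (R - S) = {}"
      proof (rule ccontr)
        assume "\<Gamma> l \<inter> (R - S) \<noteq> {}"
        then obtain j where j: "j \<in> \<Gamma> l" "j \<in> R - S" by blast
        then have "kout_adj \<Gamma> l j" using True by (auto simp: kout_adj_def)
        then show False using c True j by (auto simp: closedS_def)
      qed
      then show ?thesis using True B by (simp add: Acl_def)
    next
      case False
      show ?thesis
      proof (cases "l \<in> R - S")
        case True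
        have "\<Gamma> l \<inter> S = {}"
        proof (rule ccontr)
          assume "\<Gamma> l \<inter> S \<noteq> {}"
          then obtain i where i: "i \<in> \<Gamma> l" "i \<in> S" by blast
          then have "kout_adj \<Gamma> i l" using True by (auto simp: kout_adj_def)
          then show False using c True i by (auto simp: closedS_def)
        qed
        then show ?thesis using True False B by (simp add: Acl_def)
      next
        case False2: False
        then show ?thesis using False B by (simp add: Acl_def)
      qed
    qed
  qed
next
  assume a: "\<forall>l\<in>{1..n}. \<Gamma> l \<in> Acl n K R S l"
  show "closedS \<Gamma> R S"
    unfolding closedS_def
  proof (intro ballI notI)
    fix i j assume i: "i \<in> S" and j: "j \<in> R - S" and adj: "kout_adj \<Gamma> i j"
    have i1: "i \<in> {1..n}" and j1: "j \<in> {1..n}" using i j R S by auto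
    have "\<Gamma> i \<in> Acl n K R S i" using a i1 by blast
    then have "\<Gamma> i \<inter> (R - S) = {}" using i by (simp add: Acl_def)
    moreover have "\<Gamma> j \<in> Acl n K R S j" using a j1 by blast
    then have "\<Gamma> j \<inter> S = {}" using j by (simp add: Acl_def)
    ultimately show False using adj i j by (auto simp: kout_adj_def)
  qed
qed

lemma prob_closed:
  assumes D: "D \<subseteq> {1..n}" and R: "R = {1..n} - D" and S: "S \<subseteq> R" and K: "K < n"
  shows "real (card {\<Gamma> \<in> GG n K. closedS \<Gamma> R S}) / real (card (GG n K))
     = (real ((card S + card D - 1) choose K) / real ((n - 1) choose K)) ^ card S
       * (real ((n - 1 - card S) choose K) / real ((n - 1) choose K)) ^ (card R - card S)"
proof -
  have RS: "R \<subseteq> {1..n}" using R by auto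
  have eq: "{\<Gamma> \<in> GG n K. closedS \<Gamma> R S} = {\<Gamma> \<in> PiE {1..n} (Bs n K). \<forall>l\<in>{1..n}. \<Gamma> l \<in> Acl n K R S l}"
    using closed_iff[OF _ RS S] by (auto simp: GG_def)
  have sub: "Acl n K R S l \<subseteq> Bs n K l" for l by (auto simp: Acl_def)
  have "real (card {\<Gamma> \<in> GG n K. closedS \<Gamma> R S}) / real (card (GG n K))
      = (\<Prod>l\<in>{1..n}. real (card (Acl n K R S l)) / real (card (Bs n K l)))"
    unfolding eq by (unfold GG_def, rule prob_PiE_sub) (auto simp: sub)
  also have "\<dots> = (real ((card S + card D - 1) choose K) / real ((n - 1) choose K)) ^ card S
       * (real ((n - 1 - card S) choose K) / real ((n - 1) choose K)) ^ card (R - S)"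
  proof (rule prod_three)
    show "S \<inter> (R - S) = {}" by blast
    show "S \<subseteq> {1..n}" "R - S \<subseteq> {1..n}" using S RS by auto
  next
    fix l assume l: "l \<in> S"
    have l1: "l \<in> {1..n}" using l S RS by auto
    have e: "{1..n} - {l} - (R - S) = (S \<union> D) - {l}" using R S D l by auto
    have SD: "S \<inter> D = {}" using S R by auto
    have fS: "finite S" using S R finite_subset by auto
    have fD: "finite D" using D finite_subset by auto
    have "card ((S \<union> D) - {l}) = card S + card D - 1"
      using l SD fS fD by (simp add: card_Un_disjoint)
    then show "real (card (Acl n K R S l)) / real (card (Bs n K l)) =
        real ((card S + card D - 1) choose K) / real ((n - 1) choose K)"
      using l l1 e by (simp add: Acl_def card_Bs_restrict card_Bs)
  next
    fix l assume l: "l \<in> R - S"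
    have l1: "l \<in> {1..n}" using l RS by auto
    have fS: "finite S" using S R finite_subset by auto
    have "card ({1..n} - {l} - S) = card ({1..n} - S) - 1"
    proof -
      have "{1..n} - {l} - S = ({1..n} - S) - {l}" by blast
      moreover have "l \<in> {1..n} - S" using l l1 by blast
      ultimately show ?thesis by (simp add: card_Diff_singleton)
    qed
    also have "card ({1..n} - S) = n - card S"
      using S RS by (subst card_Diff_subset) (auto intro: finite_subset)
    finally have "card ({1..n} - {l} - S) = n - 1 - card S" by simp
    then show "real (card (Acl n K R S l)) / real (card (Bs n K l)) =
        real ((n - 1 - card S) choose K) / real ((n - 1) choose K)"
      using l l1 by (simp add: Acl_def card_Bs_restrict card_Bs)
  next
    fix l assume l: "l \<in> {1..n} - S - (R - S)"
    have "(n - 1 choose K) > 0" using K by simp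
    moreover have "l \<notin> S" "l \<notin> R - S" "l \<in> {1..n}" using l by auto
    ultimately show "real (card (Acl n K R S l)) / real (card (Bs n K l)) = 1"
      unfolding Acl_def by (simp add: card_Bs)
  qed simp
  also have "card (R - S) = card R - card S"
    using S R by (subst card_Diff_subset) (auto intro: finite_subset)
  finally show ?thesis .
qed





definition hcl :: "nat \<Rightarrow> nat \<Rightarrow> nat \<Rightarrow> nat \<Rightarrow> real" where
  "hcl n K g k = (real ((k + g - 1) choose K) / real ((n - 1) choose K)) ^ k
       * (real ((n - 1 - k) choose K) / real ((n - 1) choose K)) ^ (n - g - k)"

definition Fup :: "nat \<Rightarrow> nat \<Rightarrow> nat \<Rightarrow> real" where
  "Fup n K g = (\<Sum>k\<in>{1..(n - g) div 2}. real ((n - g) choose k) * hcl n K g k)"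

lemma fixedD_upper:
  assumes D: "D \<in> DD n g" and K: "K < n"
  shows "real (card {\<Gamma> \<in> GG n K. \<not> connected_on ({1..n} - D) (kout_adj \<Gamma>)}) \<le> Fup n K g * real (card (GG n K))"
proof -
  define R where "R = {1..n} - D"
  have Dsub: "D \<subseteq> {1..n}" and cD: "card D = g" using D by (auto simp: DD_def)
  have fR: "finite R" by (simp add: R_def)
  have cR: "card R = n - g" using Dsub cD by (simp add: R_def card_Diff_subset finite_subset)
  define Ss where "Ss = {S. S \<subseteq> R \<and> S \<noteq> {} \<and> 2 * card S \<le> card R}"
  have fSs: "finite Ss" by (rule finite_subset[of _ "Pow R"]) (auto simp: Ss_def fR)
  have pc: "real (card {\<Gamma> \<in> GG n K. closedS \<Gamma> R S}) = hcl n K g (card S) * real (card (GG n K))"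
    if "S \<in> Ss" for S
  proof -
    have S: "S \<subseteq> R" using that by (simp add: Ss_def)
    have ne: "real (card (GG n K)) > 0"
    proof -
      have "card (GG n K) = (\<Prod>i\<in>{1..n}. card (Bs n K i))" by (simp add: GG_def card_PiE)
      also have "\<dots> = (\<Prod>i\<in>{1..n}. (n - 1) choose K)" by (rule prod.cong) (auto simp: card_Bs)
      finally show ?thesis using K by simp
    qed
    have "real (card {\<Gamma> \<in> GG n K. closedS \<Gamma> R S}) / real (card (GG n K)) = hcl n K g (card S)"
      using prob_closed[OF Dsub R_def S K] cD cR by (simp add: hcl_def)
    then show ?thesis using ne by (simp add: divide_simps)
  qed
  have "{\<Gamma> \<in> GG n K. \<not> connected_on R (kout_adj \<Gamma>)} \<subseteq> (\<Union>S\<in>Ss. {\<Gamma> \<in> GG n K. closedS \<Gamma> R S})"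
    using disc_closed[OF fR] by (auto simp: Ss_def)
  then have "card {\<Gamma> \<in> GG n K. \<not> connected_on R (kout_adj \<Gamma>)} \<le> card (\<Union>S\<in>Ss. {\<Gamma> \<in> GG n K. closedS \<Gamma> R S})"
    by (intro card_mono) (auto intro: finite_subset[OF _ finite_GG])
  also have "\<dots> \<le> (\<Sum>S\<in>Ss. card {\<Gamma> \<in> GG n K. closedS \<Gamma> R S})"
    by (rule card_UN_le[OF fSs])
  finally have "real (card {\<Gamma> \<in> GG n K. \<not> connected_on R (kout_adj \<Gamma>)}) \<le> (\<Sum>S\<in>Ss. real (card {\<Gamma> \<in> GG n K. closedS \<Gamma> R S}))"
    unfolding of_nat_sum[symmetric] of_nat_le_iff .
  also have "\<dots> = (\<Sum>S\<in>Ss. hcl n K g (card S)) * real (card (GG n K))"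
    by (simp add: pc sum_distrib_right)
  also have "(\<Sum>S\<in>Ss. hcl n K g (card S)) = (\<Sum>k\<in>{1..(n - g) div 2}. \<Sum>S\<in>{S \<in> Ss. card S = k}. hcl n K g (card S))"
  proof (rule sum.group[symmetric, OF fSs])
    show "finite {1..(n - g) div 2}" by simp
    show "card ` Ss \<subseteq> {1..(n - g) div 2}"
    proof
      fix k assume "k \<in> card ` Ss"
      then obtain S where S: "S \<in> Ss" "k = card S" by blast
      have "finite S" using S fR by (auto simp: Ss_def intro: finite_subset)
      then have "card S \<ge> 1" using S by (auto simp: Ss_def card_gt_0_iff Suc_le_eq)
      moreover have "2 * card S \<le> n - g" using S cR by (simp add: Ss_def)
      ultimately show "k \<in> {1..(n - g) div 2}" using S by auto
    qed
  qed
  also have "\<dots> = (\<Sum>k\<in>{1..(n - g) div 2}. real ((n - g) choose k) * hcl n K g k)"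
  proof (rule sum.cong[OF refl])
    fix k assume k: "k \<in> {1..(n - g) div 2}"
    have e: "{S \<in> Ss. card S = k} = {S. S \<subseteq> R \<and> card S = k}"
      using k cR by (auto simp: Ss_def)
    have "(\<Sum>S\<in>{S \<in> Ss. card S = k}. hcl n K g (card S)) = (\<Sum>S\<in>{S \<in> Ss. card S = k}. hcl n K g k)"
      by (rule sum.cong) auto
    also have "\<dots> = real (card {S. S \<subseteq> R \<and> card S = k}) * hcl n K g k" by (simp add: e)
    also have "card {S. S \<subseteq> R \<and> card S = k} = (n - g) choose k" using fR cR by (simp add: n_subsets)
    finally show "(\<Sum>S\<in>{S \<in> Ss. card S = k}. hcl n K g (card S)) = real ((n - g) choose k) * hcl n K g k" .
  qed
  finally show ?thesis by (simp add: Fup_def R_def)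
qed





definition Iso :: "nat \<Rightarrow> nat set \<Rightarrow> (nat \<Rightarrow> nat set) \<Rightarrow> nat \<Rightarrow> bool" where
  "Iso n R \<Gamma> i \<longleftrightarrow> \<Gamma> i \<inter> R = {} \<and> (\<forall>j\<in>R - {i}. i \<notin> \<Gamma> j)"

definition A2 :: "nat \<Rightarrow> nat \<Rightarrow> nat set \<Rightarrow> nat set \<Rightarrow> nat \<Rightarrow> nat set set" where
  "A2 n K R I l = (if l \<in> I then {T \<in> Bs n K l. T \<inter> R = {}}
     else if l \<in> R - I then {T \<in> Bs n K l. T \<inter> I = {}} else Bs n K l)"

lemma iso_iff:
  assumes G: "\<Gamma> \<in> GG n K" and R: "R \<subseteq> {1..n}" and I: "I \<subseteq> R"
  shows "(\<forall>i\<in>I. Iso n R \<Gamma> i) \<longleftrightarrow> (\<forall>l\<in>{1..n}. \<Gamma> l \<in> A2 n K R I l)"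
proof
  assume a: "\<forall>i\<in>I. Iso n R \<Gamma> i"
  show "\<forall>l\<in>{1..n}. \<Gamma> l \<in> A2 n K R I l"
  proof
    fix l assume l: "l \<in> {1..n}"
    have B: "\<Gamma> l \<in> Bs n K l" using GG_memD[OF G l] .
    show "\<Gamma> l \<in> A2 n K R I l"
    proof (cases "l \<in> I")
      case True
      then have "\<Gamma> l \<inter> R = {}" using a by (simp add: Iso_def)
      then show ?thesis using True B by (simp add: A2_def)
    next
      case False
      show ?thesis
      proof (cases "l \<in> R - I")
        case True
        have "\<Gamma> l \<inter> I = {}"
        proof (rule ccontr)
          assume "\<Gamma> l \<inter> I \<noteq> {}"
          then obtain i where i: "i \<in> \<Gamma> l" "i \<in> I" by blast
          have "l \<in> R - {i}" using True i by auto
          then show False using a i unfolding Iso_def by blast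
        qed
        then show ?thesis using True False B by (simp add: A2_def)
      next
        case False2: False
        then show ?thesis using False B by (simp add: A2_def)
      qed
    qed
  qed
next
  assume a: "\<forall>l\<in>{1..n}. \<Gamma> l \<in> A2 n K R I l"
  show "\<forall>i\<in>I. Iso n R \<Gamma> i"
  proof
    fix i assume i: "i \<in> I"
    have i1: "i \<in> {1..n}" using i I R by auto
    have "\<Gamma> i \<in> A2 n K R I i" using a i1 by blast
    then have c1: "\<Gamma> i \<inter> R = {}" using i by (simp add: A2_def)
    have "i \<notin> \<Gamma> j" if j: "j \<in> R - {i}" for j
    proof (cases "j \<in> I")
      case True
      have "\<Gamma> j \<in> A2 n K R I j" using a j R by auto
      then have "\<Gamma> j \<inter> R = {}" using True by (simp add: A2_def)
      then show ?thesis using i I by auto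
    next
      case False
      have "\<Gamma> j \<in> A2 n K R I j" using a j R by auto
      then have "\<Gamma> j \<inter> I = {}" using False j by (simp add: A2_def)
      then show ?thesis using i by auto
    qed
    then show "Iso n R \<Gamma> i" using c1 by (simp add: Iso_def)
  qed
qed

lemma card_GG_pos: "K < n \<Longrightarrow> card (GG n K) > 0"
proof -
  assume K: "K < n"
  have "card (GG n K) = (\<Prod>i\<in>{1..n}. card (Bs n K i))" by (simp add: GG_def card_PiE)
  also have "\<dots> = (\<Prod>i\<in>{1..n}. (n - 1) choose K)" by (rule prod.cong) (auto simp: card_Bs)
  finally show ?thesis using K by simp
qed

lemma prob_iso:
  assumes D: "D \<subseteq> {1..n}" and R: "R = {1..n} - D" and I: "I \<subseteq> R" and K: "K < n"
  shows "real (card {\<Gamma> \<in> GG n K. \<forall>i\<in>I. Iso n R \<Gamma> i}) / real (card (GG n K))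
     = (real (card D choose K) / real ((n - 1) choose K)) ^ card I
       * (real ((n - 1 - card I) choose K) / real ((n - 1) choose K)) ^ (card R - card I)"
proof -
  have RS: "R \<subseteq> {1..n}" using R by auto
  have eq: "{\<Gamma> \<in> GG n K. \<forall>i\<in>I. Iso n R \<Gamma> i} = {\<Gamma> \<in> PiE {1..n} (Bs n K). \<forall>l\<in>{1..n}. \<Gamma> l \<in> A2 n K R I l}"
    using iso_iff[OF _ RS I] by (auto simp: GG_def)
  have sub: "A2 n K R I l \<subseteq> Bs n K l" for l by (auto simp: A2_def)
  have "real (card {\<Gamma> \<in> GG n K. \<forall>i\<in>I. Iso n R \<Gamma> i}) / real (card (GG n K))
      = (\<Prod>l\<in>{1..n}. real (card (A2 n K R I l)) / real (card (Bs n K l)))"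
    unfolding eq by (unfold GG_def, rule prob_PiE_sub) (auto simp: sub)
  also have "\<dots> = (real (card D choose K) / real ((n - 1) choose K)) ^ card I
       * (real ((n - 1 - card I) choose K) / real ((n - 1) choose K)) ^ card (R - I)"
  proof (rule prod_three)
    show "I \<inter> (R - I) = {}" by blast
    show "I \<subseteq> {1..n}" "R - I \<subseteq> {1..n}" using I RS by auto
  next
    fix l assume l: "l \<in> I"
    have l1: "l \<in> {1..n}" using l I RS by auto
    have e: "{1..n} - {l} - R = D" using R I D l by auto
    show "real (card (A2 n K R I l)) / real (card (Bs n K l)) =
        real (card D choose K) / real ((n - 1) choose K)"
      using l l1 e by (simp add: A2_def card_Bs_restrict card_Bs)
  next
    fix l assume l: "l \<in> R - I"
    have l1: "l \<in> {1..n}" using l RS by auto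
    have "card ({1..n} - {l} - I) = card ({1..n} - I) - 1"
    proof -
      have "{1..n} - {l} - I = ({1..n} - I) - {l}" by blast
      moreover have "l \<in> {1..n} - I" using l l1 by blast
      ultimately show ?thesis by (simp add: card_Diff_singleton)
    qed
    also have "card ({1..n} - I) = n - card I"
      using I RS by (subst card_Diff_subset) (auto intro: finite_subset)
    finally have "card ({1..n} - {l} - I) = n - 1 - card I" by simp
    then show "real (card (A2 n K R I l)) / real (card (Bs n K l)) =
        real ((n - 1 - card I) choose K) / real ((n - 1) choose K)"
      using l l1 by (simp add: A2_def card_Bs_restrict card_Bs)
  next
    fix l assume l: "l \<in> {1..n} - I - (R - I)"
    have "(n - 1 choose K) > 0" using K by simp
    moreover have "l \<notin> I" "l \<notin> R - I" "l \<in> {1..n}" using l by auto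
    ultimately show "real (card (A2 n K R I l)) / real (card (Bs n K l)) = 1"
      unfolding A2_def by (simp add: card_Bs)
  qed simp
  also have "card (R - I) = card R - card I"
    using I R by (subst card_Diff_subset) (auto intro: finite_subset)
  finally show ?thesis .
qed

lemma conn_no_iso:
  assumes "connected_on R (kout_adj \<Gamma>)" "i \<in> R" "j \<in> R" "i \<noteq> j"
  shows "\<not> Iso n R \<Gamma> i"
proof
  assume iso: "Iso n R \<Gamma> i"
  let ?E = "{(x,y). x \<in> R \<and> y \<in> R \<and> kout_adj \<Gamma> x y}"
  have "(i,j) \<in> ?E\<^sup>*" using assms unfolding connected_on_def by blast
  then obtain y where "(i,y) \<in> ?E" using assms(4) by (cases rule: converse_rtranclE) auto
  then have y: "y \<in> R" "kout_adj \<Gamma> i y" by auto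
  then show False using iso by (auto simp: Iso_def kout_adj_def)
qed





lemma sum_ind_card:
  assumes "finite A"
  shows "(\<Sum>x\<in>A. if P x then 1 else 0 :: real) = real (card {x \<in> A. P x})"
proof -
  have "(\<Sum>x\<in>A. if P x then 1 else 0 :: real) = real (card (A \<inter> {x. P x}))"
    using assms by (simp add: sum.If_cases)
  moreover have "A \<inter> {x. P x} = {x \<in> A. P x}" by auto
  ultimately show ?thesis by (simp only:)
qed

lemma r_ratios:
  fixes n K :: nat
  assumes "K + 3 \<le> n"
  shows "real ((n - 2) choose K) / real ((n - 1) choose K) = real (n - 1 - K) / real (n - 1)"
    and "real ((n - 3) choose K) / real ((n - 1) choose K) \<le> (real ((n - 2) choose K) / real ((n - 1) choose K))^2"
proof -
  have a1: "(n - 1 - K) * ((n - 1) choose K) = (n - 1) * ((n - 2) choose K)"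
  proof -
    have "n - 1 - 1 = n - 2" by simp
    then show ?thesis using binomial_absorb_comp[of "n - 1" K] by metis
  qed
  have a2: "(n - 2 - K) * ((n - 2) choose K) = (n - 2) * ((n - 3) choose K)"
  proof -
    have "n - 2 - 1 = n - 3" by simp
    then show ?thesis using binomial_absorb_comp[of "n - 2" K] by metis
  qed
  have p1: "real ((n - 1) choose K) > 0" using assms by simp
  have p2: "real ((n - 2) choose K) > 0" using assms by simp
  have n1: "real (n - 1) > 0" "real (n - 2) > 0" using assms by auto
  have e1: "real ((n - 2) choose K) = real (n - 1 - K) * real ((n - 1) choose K) / real (n - 1)"
  proof -
    have "real (n - 1 - K) * real ((n - 1) choose K) = real (n - 1) * real ((n - 2) choose K)"
      by (metis a1 of_nat_mult)
    then show ?thesis using n1 by (simp add: eq_divide_eq mult.commute)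
  qed
  have e2: "real ((n - 3) choose K) = real (n - 2 - K) * real ((n - 2) choose K) / real (n - 2)"
  proof -
    have "real (n - 2 - K) * real ((n - 2) choose K) = real (n - 2) * real ((n - 3) choose K)"
      by (metis a2 of_nat_mult)
    then show ?thesis using n1 by (simp add: eq_divide_eq mult.commute)
  qed
  show r1: "real ((n - 2) choose K) / real ((n - 1) choose K) = real (n - 1 - K) / real (n - 1)"
    using e1 p1 by simp
  have x1: "real (n - 2 - K) = real n - 2 - real K" "real (n - 1 - K) = real n - 1 - real K"
     "real (n - 2) = real n - 2" "real (n - 1) = real n - 1" using assms by (auto simp: of_nat_diff)
  have cm: "real (n - 2 - K) * real (n - 1) \<le> real (n - 1 - K) * real (n - 2)"
    unfolding x1 by (simp add: algebra_simps)
  have le: "real (n - 2 - K) / real (n - 2) \<le> real (n - 1 - K) / real (n - 1)"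
    using n1 cm by (simp add: divide_simps)
  have "real ((n - 3) choose K) / real ((n - 1) choose K)
     = (real ((n - 2) choose K) / real ((n - 1) choose K)) * (real (n - 2 - K) / real (n - 2))"
    using e2 by (simp add: mult_ac)
  also have "\<dots> \<le> (real ((n - 2) choose K) / real ((n - 1) choose K)) * (real (n - 1 - K) / real (n - 1))"
    using le p1 p2 by (intro mult_left_mono) auto
  also have "\<dots> = (real ((n - 2) choose K) / real ((n - 1) choose K))^2"
    using r1 by (simp add: power2_eq_square)
  finally show "real ((n - 3) choose K) / real ((n - 1) choose K) \<le> (real ((n - 2) choose K) / real ((n - 1) choose K))^2" .
qed


definition rho :: "nat \<Rightarrow> nat \<Rightarrow> nat \<Rightarrow> real" where
  "rho n K g = real (g choose K) / real ((n - 1) choose K)"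
definition rr1 :: "nat \<Rightarrow> nat \<Rightarrow> real" where
  "rr1 n K = real ((n - 2) choose K) / real ((n - 1) choose K)"
definition pp1 :: "nat \<Rightarrow> nat \<Rightarrow> nat \<Rightarrow> real" where
  "pp1 n K g = rho n K g * rr1 n K ^ (n - g - 1)"
definition Epsl :: "nat \<Rightarrow> nat \<Rightarrow> nat \<Rightarrow> real" where
  "Epsl n K g = 1 / (real (n - g) * pp1 n K g) + 1 / (rr1 n K)^2 - 1"

lemma fixedD_lower:
  assumes D: "D \<in> DD n g" and K3: "K + 3 \<le> n" and Kg: "K \<le> g" and m2: "2 \<le> n - g"
  shows "real (card {\<Gamma> \<in> GG n K. connected_on ({1..n} - D) (kout_adj \<Gamma>)}) \<le> Epsl n K g * real (card (GG n K))"
proof -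
  define R where "R = {1..n} - D"
  define m where "m = n - g"
  define G where "G = GG n K"
  define NG where "NG = real (card G)"
  define p1 where "p1 = pp1 n K g"
  define r1 where "r1 = rr1 n K"
  define q where "q = rho n K g ^ 2 * r1 ^ (2 * (m - 2))"
  have Dsub: "D \<subseteq> {1..n}" and cD: "card D = g" using D by (auto simp: DD_def)
  have fR: "finite R" by (simp add: R_def)
  have cR: "card R = m" using Dsub cD by (simp add: R_def m_def card_Diff_subset finite_subset)
  have fG: "finite G" by (simp add: G_def finite_GG)
  have NGpos: "NG > 0" using card_GG_pos[of K n] K3 by (simp add: NG_def G_def)
  have c1pos: "real ((n - 1) choose K) > 0" using K3 by simp
  have rhopos: "rho n K g > 0" using Kg K3 by (simp add: rho_def)
  have r1pos: "r1 > 0" using K3 by (simp add: r1_def rr1_def)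
  have p1pos: "p1 > 0" using rhopos r1pos by (simp add: p1_def pp1_def r1_def)
  have P1: "real (card {\<Gamma> \<in> G. Iso n R \<Gamma> i}) = p1 * NG" if i: "i \<in> R" for i
  proof -
    have I: "{i} \<subseteq> R" using i by simp
    have e: "{\<Gamma> \<in> G. \<forall>l\<in>{i}. Iso n R \<Gamma> l} = {\<Gamma> \<in> G. Iso n R \<Gamma> i}" by simp
    have "n - 1 - card {i} = n - 2" by simp
    then have "real (card {\<Gamma> \<in> G. Iso n R \<Gamma> i}) / NG = p1"
      using prob_iso[OF Dsub R_def I] K3 cD cR
      by (simp add: e G_def NG_def p1_def pp1_def rho_def rr1_def m_def)
    then show ?thesis using NGpos by (simp add: divide_simps)
  qed
  have P2: "real (card {\<Gamma> \<in> G. Iso n R \<Gamma> i \<and> Iso n R \<Gamma> j}) \<le> q * NG"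
    if i: "i \<in> R" and j: "j \<in> R" and ij: "i \<noteq> j" for i j
  proof -
    have I: "{i, j} \<subseteq> R" using i j by simp
    have e: "{\<Gamma> \<in> G. \<forall>l\<in>{i, j}. Iso n R \<Gamma> l} = {\<Gamma> \<in> G. Iso n R \<Gamma> i \<and> Iso n R \<Gamma> j}" by auto
    have ci: "card {i, j} = 2" using ij by simp
    have "n - 1 - card {i, j} = n - 3" using ci by simp
    then have eq: "real (card {\<Gamma> \<in> G. Iso n R \<Gamma> i \<and> Iso n R \<Gamma> j}) / NG
         = rho n K g ^ 2 * (real ((n - 3) choose K) / real ((n - 1) choose K)) ^ (m - 2)"
      using prob_iso[OF Dsub R_def I] K3 cD cR ci
      by (simp add: e G_def NG_def rho_def m_def)
    have r2: "real ((n - 3) choose K) / real ((n - 1) choose K) \<le> r1 ^ 2"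
      using r_ratios(2)[OF K3] by (simp add: r1_def rr1_def)
    have "(real ((n - 3) choose K) / real ((n - 1) choose K)) ^ (m - 2) \<le> (r1 ^ 2) ^ (m - 2)"
      using r2 by (intro power_mono) auto
    then have "rho n K g ^ 2 * (real ((n - 3) choose K) / real ((n - 1) choose K)) ^ (m - 2) \<le> q"
      using rhopos by (simp add: q_def power_mult mult_left_mono)
    then have "real (card {\<Gamma> \<in> G. Iso n R \<Gamma> i \<and> Iso n R \<Gamma> j}) / NG \<le> q" using eq by simp
    then show ?thesis using NGpos by (simp add: divide_simps)
  qed
  define ind where "ind i \<Gamma> = (if Iso n R \<Gamma> i then 1 else 0 :: real)" for i \<Gamma>
  define X where "X \<Gamma> = (\<Sum>i\<in>R. ind i \<Gamma>)" for \<Gamma>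
  define \<mu> where "\<mu> = real m * p1"
  have mupos: "\<mu> > 0" using m2 p1pos by (simp add: \<mu>_def m_def)
  have SX: "(\<Sum>\<Gamma>\<in>G. X \<Gamma>) = \<mu> * NG"
  proof -
    have "(\<Sum>\<Gamma>\<in>G. X \<Gamma>) = (\<Sum>i\<in>R. \<Sum>\<Gamma>\<in>G. ind i \<Gamma>)"
      unfolding X_def by (rule sum.swap)
    also have "\<dots> = (\<Sum>i\<in>R. p1 * NG)"
      by (rule sum.cong[OF refl]) (simp add: ind_def sum_ind_card[OF fG] P1)
    also have "\<dots> = \<mu> * NG" by (simp add: cR \<mu>_def)
    finally show ?thesis .
  qed
  have SX2: "(\<Sum>\<Gamma>\<in>G. X \<Gamma> ^ 2) \<le> (\<mu> + real m * (real m - 1) * q) * NG"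
  proof -
    have "(\<Sum>\<Gamma>\<in>G. X \<Gamma> ^ 2) = (\<Sum>\<Gamma>\<in>G. \<Sum>i\<in>R. \<Sum>j\<in>R. ind i \<Gamma> * ind j \<Gamma>)"
      by (simp add: X_def power2_eq_square sum_product)
    also have "\<dots> = (\<Sum>i\<in>R. \<Sum>\<Gamma>\<in>G. \<Sum>j\<in>R. ind i \<Gamma> * ind j \<Gamma>)" by (rule sum.swap)
    also have "\<dots> = (\<Sum>i\<in>R. \<Sum>j\<in>R. \<Sum>\<Gamma>\<in>G. ind i \<Gamma> * ind j \<Gamma>)"
      by (rule sum.cong[OF refl], rule sum.swap)
    also have "\<dots> \<le> (\<Sum>i\<in>R. \<Sum>j\<in>R. (if i = j then p1 else q) * NG)"
    proof (intro sum_mono)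
      fix i j assume i: "i \<in> R" and j: "j \<in> R"
      have "(\<Sum>\<Gamma>\<in>G. ind i \<Gamma> * ind j \<Gamma>) = real (card {\<Gamma> \<in> G. Iso n R \<Gamma> i \<and> Iso n R \<Gamma> j})"
        by (simp add: ind_def sum_ind_card[OF fG, symmetric] if_distrib if_distribR conj_commute) (rule sum.cong, auto)
      also have "\<dots> \<le> (if i = j then p1 else q) * NG"
        using P1[OF i] P2[OF i j] by (cases "i = j") auto
      finally show "(\<Sum>\<Gamma>\<in>G. ind i \<Gamma> * ind j \<Gamma>) \<le> (if i = j then p1 else q) * NG" .
    qed
    also have "\<dots> = (\<Sum>i\<in>R. (p1 + (real m - 1) * q) * NG)"
    proof (rule sum.cong[OF refl])
      fix i assume i: "i \<in> R"
      have "(\<Sum>j\<in>R. (if i = j then p1 else q) * NG) = (if i = i then p1 else q) * NG + (\<Sum>j\<in>R - {i}. (if i = j then p1 else q) * NG)"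
        using fR i by (rule sum.remove)
      also have "(\<Sum>j\<in>R - {i}. (if i = j then p1 else q) * NG) = (\<Sum>j\<in>R - {i}. q * NG)"
        by (rule sum.cong) auto
      also have "\<dots> = (real m - 1) * q * NG" using i fR cR m2 by (simp add: m_def of_nat_diff)
      finally show "(\<Sum>j\<in>R. (if i = j then p1 else q) * NG) = (p1 + (real m - 1) * q) * NG"
        by (simp add: algebra_simps)
    qed
    also have "\<dots> = (\<mu> + real m * (real m - 1) * q) * NG" by (simp add: cR \<mu>_def algebra_simps)
    finally show ?thesis .
  qed
  have Z: "{\<Gamma> \<in> G. connected_on R (kout_adj \<Gamma>)} \<subseteq> {\<Gamma> \<in> G. X \<Gamma> = 0}"
  proof safe
    fix \<Gamma> assume G: "\<Gamma> \<in> G" and c: "connected_on R (kout_adj \<Gamma>)"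
    have "ind i \<Gamma> = 0" if i: "i \<in> R" for i
    proof -
      have "card (R - {i}) \<ge> 1" using cR m2 i fR by (simp add: m_def)
      then obtain j where "j \<in> R - {i}" by (metis card.empty ex_in_conv not_one_le_zero)
      then show ?thesis using conn_no_iso[OF c i] i by (auto simp: ind_def)
    qed
    then show "X \<Gamma> = 0" by (simp add: X_def)
  qed
  have cheb: "real (card {\<Gamma> \<in> G. X \<Gamma> = 0}) * \<mu>^2 \<le> (\<Sum>\<Gamma>\<in>G. (X \<Gamma> - \<mu>)^2)"
  proof -
    have "real (card {\<Gamma> \<in> G. X \<Gamma> = 0}) * \<mu>^2 = (\<Sum>\<Gamma>\<in>{\<Gamma> \<in> G. X \<Gamma> = 0}. (X \<Gamma> - \<mu>)^2)" by simp
    also have "\<dots> \<le> (\<Sum>\<Gamma>\<in>G. (X \<Gamma> - \<mu>)^2)"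
      by (rule sum_mono2[OF fG]) auto
    finally show ?thesis .
  qed
  have "(\<Sum>\<Gamma>\<in>G. (X \<Gamma> - \<mu>)^2) = (\<Sum>\<Gamma>\<in>G. X \<Gamma> ^ 2) - 2 * \<mu> * (\<Sum>\<Gamma>\<in>G. X \<Gamma>) + NG * \<mu>^2"
  proof -
    have "(\<Sum>\<Gamma>\<in>G. (X \<Gamma> - \<mu>)^2) = (\<Sum>\<Gamma>\<in>G. X \<Gamma> ^ 2 - (2 * \<mu>) * X \<Gamma> + \<mu>^2)"
      by (rule sum.cong) (auto simp: power2_diff algebra_simps)
    also have "\<dots> = (\<Sum>\<Gamma>\<in>G. X \<Gamma> ^ 2) - (\<Sum>\<Gamma>\<in>G. (2 * \<mu>) * X \<Gamma>) + (\<Sum>\<Gamma>\<in>G. \<mu>^2)"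
      by (simp add: sum.distrib sum_subtractf)
    also have "(\<Sum>\<Gamma>\<in>G. (2 * \<mu>) * X \<Gamma>) = 2 * \<mu> * (\<Sum>\<Gamma>\<in>G. X \<Gamma>)"
      by (rule sum_distrib_left[symmetric])
    also have "(\<Sum>\<Gamma>\<in>G. \<mu>^2) = NG * \<mu>^2" by (simp add: NG_def)
    finally show ?thesis .
  qed
  also have "\<dots> \<le> (\<mu> + real m * (real m - 1) * q) * NG - \<mu>^2 * NG"
    using SX2 SX by (simp add: power2_eq_square algebra_simps)
  finally have "real (card {\<Gamma> \<in> G. X \<Gamma> = 0}) * \<mu>^2 \<le> (\<mu> + real m * (real m - 1) * q - \<mu>^2) * NG"
    using cheb by (simp add: algebra_simps)
  then have "real (card {\<Gamma> \<in> G. X \<Gamma> = 0}) \<le> ((\<mu> + real m * (real m - 1) * q - \<mu>^2) / \<mu>^2) * NG"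
    using mupos by (simp add: divide_simps mult.commute)
  also have "(\<mu> + real m * (real m - 1) * q - \<mu>^2) / \<mu>^2 \<le> Epsl n K g"
  proof -
    have p1sq: "p1 ^ 2 = q * r1 ^ 2"
    proof -
      have e: "(m - 1) * 2 = 2 * (m - 2) + 2" using m2 by (simp add: m_def)
      have "p1 ^ 2 = rho n K g ^ 2 * (r1 ^ (m - 1)) ^ 2"
        by (simp add: p1_def pp1_def r1_def m_def power_mult_distrib)
      also have "(r1 ^ (m - 1)) ^ 2 = r1 ^ ((m - 1) * 2)" by (simp add: power_mult)
      also have "\<dots> = r1 ^ (2 * (m - 2)) * r1 ^ 2" unfolding e by (simp add: power_add power2_eq_square)
      finally show ?thesis by (simp add: q_def)
    qed
    have qnn: "q \<ge> 0" using rhopos r1pos by (simp add: q_def)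
    have "(\<mu> + real m * (real m - 1) * q - \<mu>^2) / \<mu>^2 = 1 / \<mu> + real m * (real m - 1) * q / \<mu>^2 - 1"
      using mupos by (simp add: divide_simps power2_eq_square)
    also have "real m * (real m - 1) * q / \<mu>^2 \<le> q / p1^2"
    proof -
      have "real m * (real m - 1) * q \<le> real m * real m * q"
        using qnn by (intro mult_right_mono) (auto simp: algebra_simps)
      then have "real m * (real m - 1) * q / \<mu>^2 \<le> real m * real m * q / \<mu>^2"
        by (rule divide_right_mono) auto
      also have "\<dots> = q / p1^2" using p1pos m2 by (simp add: \<mu>_def power2_eq_square m_def)
      finally show ?thesis .
    qed
    also have "q / p1^2 = 1 / r1^2"
    proof -
      have "q > 0" using rhopos r1pos by (simp add: q_def)
      then show ?thesis unfolding p1sq by simp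
    qed
    finally show ?thesis by (simp add: Epsl_def \<mu>_def m_def p1_def r1_def)
  qed
  then have "((\<mu> + real m * (real m - 1) * q - \<mu>^2) / \<mu>^2) * NG \<le> Epsl n K g * NG"
    using NGpos by (intro mult_right_mono) auto
  finally have "real (card {\<Gamma> \<in> G. X \<Gamma> = 0}) \<le> Epsl n K g * NG" .
  moreover have "card {\<Gamma> \<in> G. connected_on R (kout_adj \<Gamma>)} \<le> card {\<Gamma> \<in> G. X \<Gamma> = 0}"
    using Z fG by (intro card_mono) auto
  ultimately show ?thesis by (simp add: G_def NG_def R_def)
qed





lemma pow_as_exp: "z > 0 \<Longrightarrow> (z::real) ^ N = exp (real N * ln z)"
  by (simp add: exp_of_nat_mult)

lemma term_bound:
  fixes n K g k :: nat and \<alpha> x0 :: real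
  assumes \<alpha>: "0 < \<alpha>" "\<alpha> < 1" and g\<alpha>: "real g \<le> \<alpha> * real n" and g\<alpha>2: "\<alpha> * real n < real g + 1"
    and k1: "1 \<le> k" and km: "2 * k \<le> n - g" and n2: "2 \<le> (1 - \<alpha>) * real n" and x0: "0 < x0"
  shows "real ((n - g) choose k) * hcl n K g k
     \<le> (real n * exp (- real K * ((1 - \<alpha> - ln \<alpha>) - x0 * (1 + 1/\<alpha>)))) ^ k
        + 2 ^ n * exp (- x0 * ((1 - \<alpha>) / 2) * real n * real K)"
proof -
  define m where "m = n - g"
  define x where "x = real k / real n"
  define y where "y = ln (\<alpha> + x) - (1 - \<alpha> - x)"
  define L where "L = 2 ^ n * exp (- x0 * ((1 - \<alpha>) / 2) * real n * real K)"
  define \<delta> where "\<delta> = real n * exp (- real K * ((1 - \<alpha> - ln \<alpha>) - x0 * (1 + 1/\<alpha>)))"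
  have n2': "real n > 2"
  proof -
    have "real n \<noteq> 0" using n2 by (cases "n = 0") auto
    then have "\<alpha> * real n > 0" using \<alpha> by simp
    then show ?thesis using n2 by (simp add: algebra_simps)
  qed
  then have npos: "real n > 0" "n \<ge> 3" by auto
  have gn: "g < n" using km k1 by simp
  have kgn: "k + g \<le> n" using km gn by linarith
  have mreal: "real m = real n - real g" using gn by (simp add: m_def of_nat_diff)
  have xpos: "x > 0" using k1 npos by (simp add: x_def)
  have c1pos: "real ((n - 1) choose K) \<ge> 0" by simp
  define a where "a = real ((k + g - 1) choose K) / real ((n - 1) choose K)"
  define b where "b = real ((n - 1 - k) choose K) / real ((n - 1) choose K)"
  have a0: "a \<ge> 0" and b0: "b \<ge> 0" by (simp_all add: a_def b_def)
  have ha: "a \<le> ((real k + real g) / real n) ^ K"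
  proof -
    have "a \<le> (real (k + g - 1) / real (n - 1)) ^ K"
      unfolding a_def using kgn npos by (intro binom_ratio_le) auto
    also have "\<dots> \<le> ((real k + real g) / real n) ^ K"
    proof (rule power_mono)
      have e1: "real (k + g - 1) = real k + real g - 1" using k1 by (simp add: of_nat_diff)
      have e2: "real (n - 1) = real n - 1" using npos by (simp add: of_nat_diff)
      have "(real k + real g - 1) * real n \<le> (real k + real g) * (real n - 1)"
        using kgn by (simp add: algebra_simps)
      then show "real (k + g - 1) / real (n - 1) \<le> (real k + real g) / real n"
        unfolding e1 e2 using npos n2' by (simp add: divide_simps)
      show "0 \<le> real (k + g - 1) / real (n - 1)" by simp
    qed
    finally show ?thesis .
  qed
  have hb: "b \<le> exp (- (real k * real K / real n))"
  proof -
    have "b \<le> (real (n - 1 - k) / real (n - 1)) ^ K"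
      unfolding b_def using npos by (intro binom_ratio_le) auto
    also have "\<dots> \<le> exp (- (real k / real n)) ^ K"
    proof (rule power_mono)
      have e1: "real (n - 1 - k) = real n - 1 - real k" using km k1 gn by (subgoal_tac "Suc k \<le> n") (simp_all add: of_nat_diff)
      have e2: "real (n - 1) = real n - 1" using npos by (simp add: of_nat_diff)
      have "real (n - 1 - k) / real (n - 1) = 1 + (- (real k / (real n - 1)))"
        unfolding e1 e2 using n2' by (simp add: field_simps)
      also have "\<dots> \<le> exp (- (real k / (real n - 1)))" by (rule exp_ge_add_one_self)
      also have "\<dots> \<le> exp (- (real k / real n))"
        using n2' by (simp add: frac_le)
      finally show "real (n - 1 - k) / real (n - 1) \<le> exp (- (real k / real n))" .
      show "0 \<le> real (n - 1 - k) / real (n - 1)" by simp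
    qed
    also have "\<dots> = exp (- (real k * real K / real n))"
      by (simp add: exp_of_nat_mult[symmetric] algebra_simps)
    finally show ?thesis .
  qed
  have hcl_eq: "hcl n K g k = a ^ k * b ^ (m - k)" by (simp add: hcl_def a_def b_def m_def)
  have "hcl n K g k \<le> (((real k + real g) / real n) ^ K) ^ k * exp (- (real k * real K / real n)) ^ (m - k)"
    unfolding hcl_eq using ha hb a0 b0
    by (intro mult_mono power_mono) auto
  also have "(((real k + real g) / real n) ^ K) ^ k = exp (real K * real k * ln ((real k + real g) / real n))"
  proof -
    have zpos: "(real k + real g) / real n > 0" using k1 npos by simp
    have "(((real k + real g) / real n) ^ K) ^ k = ((real k + real g) / real n) ^ (K * k)"
      by (simp add: power_mult)
    also have "\<dots> = exp (real (K * k) * ln ((real k + real g) / real n))"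
      by (rule pow_as_exp[OF zpos])
    finally show ?thesis by simp
  qed
  also have "exp (- (real k * real K / real n)) ^ (m - k) = exp (- (real k * real K) * (real m - real k) / real n)"
  proof -
    have mk: "real (m - k) = real m - real k" using km by (simp add: m_def of_nat_diff)
    have "exp (- (real k * real K / real n)) ^ (m - k) = exp (real (m - k) * (- (real k * real K / real n)))"
      by (rule exp_of_nat_mult[symmetric])
    also have "\<dots> = exp (- (real k * real K) * (real m - real k) / real n)"
      unfolding mk by (simp add: divide_inverse algebra_simps)
    finally show ?thesis .
  qed
  also have "exp (real K * real k * ln ((real k + real g) / real n)) * exp (- (real k * real K) * (real m - real k) / real n)
      \<le> exp (real k * real K * y)"
  proof -
    have l1: "ln ((real k + real g) / real n) \<le> ln (\<alpha> + x)"
      using k1 npos g\<alpha> by (subst ln_le_cancel_iff) (auto simp: x_def field_simps)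
    have l2: "(real m - real k) / real n \<ge> 1 - \<alpha> - x"
    proof -
      have "real m \<ge> (1 - \<alpha>) * real n" using g\<alpha> mreal by (simp add: algebra_simps)
      then have "real m / real n \<ge> 1 - \<alpha>" using npos by (simp add: pos_le_divide_eq)
      moreover have "(real m - real k) / real n = real m / real n - x" by (simp add: x_def diff_divide_distrib)
      ultimately show ?thesis by simp
    qed
    have kK: "real k * real K \<ge> 0" by simp
    have "real K * real k * ln ((real k + real g) / real n) - real k * real K * (real m - real k) / real n
        = real k * real K * (ln ((real k + real g) / real n) - (real m - real k) / real n)"
      by (simp add: algebra_simps)
    also have "\<dots> \<le> real k * real K * y"
      unfolding y_def using l1 l2 kK by (intro mult_left_mono) auto
    finally show ?thesis by (simp add: exp_add[symmetric])
  qed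
  finally have hcl_le: "hcl n K g k \<le> exp (real k * real K * y)" .
  have hcl0: "hcl n K g k \<ge> 0" using a0 b0 hcl_eq by simp
  have L0: "L \<ge> 0" by (simp add: L_def)
  show ?thesis
  proof (cases "real k \<le> x0 * real n")
    case True
    have e: "\<alpha> + x = \<alpha> * (1 + x / \<alpha>)" using \<alpha> by (simp add: field_simps)
    have xa: "1 + x / \<alpha> > 0" using \<alpha> xpos by (simp add: add_pos_pos)
    have "ln (\<alpha> + x) = ln \<alpha> + ln (1 + x / \<alpha>)"
      using \<alpha> xa by (subst e, subst ln_mult) auto
    also have "\<dots> \<le> ln \<alpha> + x / \<alpha>" using ln_add_one_self_le_self[of "x/\<alpha>"] xpos \<alpha> by simp
    finally have "y \<le> - (1 - \<alpha> - ln \<alpha>) + x * (1 + 1/\<alpha>)" by (simp add: y_def algebra_simps)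
    also have "\<dots> \<le> - (1 - \<alpha> - ln \<alpha>) + x0 * (1 + 1/\<alpha>)"
      using True npos \<alpha> by (intro add_left_mono mult_right_mono) (auto simp: x_def field_simps)
    finally have y1: "y \<le> - ((1 - \<alpha> - ln \<alpha>) - x0 * (1 + 1/\<alpha>))" by simp
    have "exp (real k * real K * y) \<le> exp (real k * (- real K * ((1 - \<alpha> - ln \<alpha>) - x0 * (1 + 1/\<alpha>))))"
    proof -
      have "real k * real K * y \<le> real k * real K * (- ((1 - \<alpha> - ln \<alpha>) - x0 * (1 + 1/\<alpha>)))"
        using y1 by (intro mult_left_mono) auto
      then show ?thesis by (simp add: algebra_simps)
    qed
    also have "\<dots> = exp (- real K * ((1 - \<alpha> - ln \<alpha>) - x0 * (1 + 1/\<alpha>))) ^ k"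
      by (rule exp_of_nat_mult)
    finally have e: "hcl n K g k \<le> exp (- real K * ((1 - \<alpha> - ln \<alpha>) - x0 * (1 + 1/\<alpha>))) ^ k"
      using hcl_le by linarith
    have bk: "real ((n - g) choose k) \<le> real n ^ k"
    proof -
      have "(n - g) choose k \<le> (n - g) ^ k" using km by (intro binomial_le_pow) auto
      also have "\<dots> \<le> n ^ k" by (intro power_mono) auto
      finally show ?thesis by (metis of_nat_le_iff of_nat_power)
    qed
    have "real ((n - g) choose k) * hcl n K g k \<le> real n ^ k * exp (- real K * ((1 - \<alpha> - ln \<alpha>) - x0 * (1 + 1/\<alpha>))) ^ k"
      using bk e hcl0 by (intro mult_mono) auto
    also have "\<dots> = \<delta> ^ k" by (simp add: \<delta>_def power_mult_distrib)
    finally have t: "real ((n - g) choose k) * hcl n K g k \<le> \<delta> ^ k" .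
    show ?thesis using t L0 unfolding \<delta>_def L_def by linarith
  next
    case False
    have xb: "x \<le> (1 - \<alpha>) / 2 + 1 / (2 * real n)"
    proof -
      have "2 * real k \<le> real n - real g" using km gn by (simp add: of_nat_diff[symmetric] del: of_nat_diff)
      then show ?thesis using g\<alpha>2 npos by (simp add: x_def field_simps)
    qed
    have "1 / (2 * real n) \<le> (1 - \<alpha>) / 4" using n2 npos by (simp add: field_simps)
    then have "y \<le> 2 * (\<alpha> + x - 1)" using ln_le_minus_one[of "\<alpha> + x"] \<alpha> xpos by (simp add: y_def)
    also have "\<dots> \<le> - ((1 - \<alpha>) / 2)"
    proof -
      obtain t where t: "t = 1 / (2 * real n)" by blast
      have "x \<le> (1 - \<alpha>) / 2 + t" "t \<le> (1 - \<alpha>) / 4"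
        using xb \<open>1 / (2 * real n) \<le> (1 - \<alpha>) / 4\<close> t by auto
      then show ?thesis by (simp add: field_simps)
    qed
    finally have y2: "y \<le> - ((1 - \<alpha>) / 2)" .
    have "real k * real K * y \<le> real k * real K * (- ((1 - \<alpha>) / 2))"
      using y2 by (intro mult_left_mono) auto
    also have "\<dots> \<le> (x0 * real n) * real K * (- ((1 - \<alpha>) / 2))"
      using False \<alpha> by (intro mult_right_mono_neg mult_right_mono) auto
    finally have h: "real k * real K * y \<le> (x0 * real n) * real K * (- ((1 - \<alpha>) / 2))" .
    have eqq: "(x0 * real n) * real K * (- ((1 - \<alpha>) / 2)) = - x0 * ((1 - \<alpha>) / 2) * real n * real K"
      by (simp add: field_simps)
    have "exp (real k * real K * y) \<le> exp (- x0 * ((1 - \<alpha>) / 2) * real n * real K)"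
      using h unfolding eqq by simp
    then have e: "hcl n K g k \<le> exp (- x0 * ((1 - \<alpha>) / 2) * real n * real K)" using hcl_le by linarith
    have bk: "real ((n - g) choose k) \<le> 2 ^ n"
    proof -
      have "(n - g) choose k \<le> 2 ^ (n - g)" by (rule binomial_le_pow2)
      also have "\<dots> \<le> 2 ^ n" by (intro power_increasing) auto
      finally show ?thesis by (metis of_nat_le_iff of_nat_power of_nat_numeral)
    qed
    have "real ((n - g) choose k) * hcl n K g k \<le> L"
      unfolding L_def using bk e hcl0 by (intro mult_mono) auto
    moreover have "\<delta> ^ k \<ge> 0" by (simp add: \<delta>_def)
    ultimately show ?thesis unfolding \<delta>_def L_def by linarith
  qed
qed





lemma geom_bound:
  fixes \<delta> :: real
  assumes "0 \<le> \<delta>" "\<delta> \<le> 1/2"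
  shows "(\<Sum>k\<in>{1..N}. \<delta> ^ k) \<le> 2 * \<delta>"
proof -
  have e: "(1 - \<delta>) * (\<Sum>k\<in>{1..N}. \<delta> ^ k) = \<delta> - \<delta> ^ Suc N"
  proof (induction N)
    case 0
    then show ?case by simp
  next
    case (Suc N)
    have "(\<Sum>k\<in>{1..Suc N}. \<delta> ^ k) = (\<Sum>k\<in>{1..N}. \<delta> ^ k) + \<delta> ^ Suc N"
      by (simp add: sum.cl_ivl_Suc)
    then have "(1 - \<delta>) * (\<Sum>k\<in>{1..Suc N}. \<delta> ^ k) = (1 - \<delta>) * (\<Sum>k\<in>{1..N}. \<delta> ^ k) + (1 - \<delta>) * \<delta> ^ Suc N"
      by (simp add: algebra_simps)
    also have "\<dots> = \<delta> - \<delta> ^ Suc (Suc N)" using Suc by (simp add: algebra_simps)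
    finally show ?case .
  qed
  have S0: "(\<Sum>k\<in>{1..N}. \<delta> ^ k) \<ge> 0" using assms by (intro sum_nonneg) auto
  have "(1 - \<delta>) * (\<Sum>k\<in>{1..N}. \<delta> ^ k) \<le> \<delta>" using e assms by simp
  moreover have "(1/2) * (\<Sum>k\<in>{1..N}. \<delta> ^ k) \<le> (1 - \<delta>) * (\<Sum>k\<in>{1..N}. \<delta> ^ k)"
    using S0 assms by (intro mult_right_mono) auto
  ultimately show ?thesis by linarith
qed

lemma Fup_le:
  fixes n K g :: nat and \<alpha> x0 :: real
  assumes \<alpha>: "0 < \<alpha>" "\<alpha> < 1" and g\<alpha>: "real g \<le> \<alpha> * real n" and g\<alpha>2: "\<alpha> * real n < real g + 1"
    and n2: "2 \<le> (1 - \<alpha>) * real n" and x0: "0 < x0"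
    and d: "real n * exp (- real K * ((1 - \<alpha> - ln \<alpha>) - x0 * (1 + 1/\<alpha>))) \<le> 1/2"
  shows "Fup n K g \<le> 2 * (real n * exp (- real K * ((1 - \<alpha> - ln \<alpha>) - x0 * (1 + 1/\<alpha>))))
           + real n * (2 ^ n * exp (- x0 * ((1 - \<alpha>) / 2) * real n * real K))"
proof -
  define \<delta> where "\<delta> = real n * exp (- real K * ((1 - \<alpha> - ln \<alpha>) - x0 * (1 + 1/\<alpha>)))"
  define L where "L = 2 ^ n * exp (- x0 * ((1 - \<alpha>) / 2) * real n * real K)"
  have d0: "\<delta> \<ge> 0" by (simp add: \<delta>_def)
  have L0: "L \<ge> 0" by (simp add: L_def)
  have "Fup n K g \<le> (\<Sum>k\<in>{1..(n - g) div 2}. \<delta> ^ k + L)"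
    unfolding Fup_def
  proof (rule sum_mono)
    fix k assume k: "k \<in> {1..(n - g) div 2}"
    show "real ((n - g) choose k) * hcl n K g k \<le> \<delta> ^ k + L"
      unfolding \<delta>_def L_def using k
      by (intro term_bound[OF \<alpha> g\<alpha> g\<alpha>2 _ _ n2 x0]) auto
  qed
  also have "\<dots> \<le> (\<Sum>k\<in>{1..n}. \<delta> ^ k + L)"
    using d0 L0 by (intro sum_mono2) auto
  also have "\<dots> = (\<Sum>k\<in>{1..n}. \<delta> ^ k) + real n * L" by (simp add: sum.distrib)
  also have "\<dots> \<le> 2 * \<delta> + real n * L" using geom_bound[OF d0] d by (simp add: \<delta>_def)
  finally show ?thesis by (simp add: \<delta>_def L_def)
qed





lemma A_pos: "0 < (\<alpha>::real) \<Longrightarrow> \<alpha> < 1 \<Longrightarrow> 1 - \<alpha> - ln \<alpha> > 0"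
  using ln_le_minus_one[of \<alpha>] by linarith

lemma ev_n2: "0 < \<alpha> \<Longrightarrow> \<alpha> < 1 \<Longrightarrow> eventually (\<lambda>n. 2 \<le> (1 - \<alpha>) * real n) sequentially"
proof -
  assume a: "0 < \<alpha>" "\<alpha> < 1"
  have "eventually (\<lambda>n. real n \<ge> 2 / (1 - \<alpha>)) sequentially"
    using filterlim_real_sequentially by (simp add: filterlim_at_top)
  then show ?thesis
    by eventually_elim (use a in \<open>simp add: field_simps\<close>)
qed

lemma ev_ln_ge: "eventually (\<lambda>n. ln (real n) \<ge> T) sequentially"
proof -
  have "filterlim (\<lambda>n::nat. ln (real n)) at_top at_top" by real_asymp
  then show ?thesis by (simp add: filterlim_at_top)
qed

lemma Fup_ev:
  fixes \<alpha> c1 :: real and K :: "nat \<Rightarrow> nat"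
  assumes \<alpha>: "0 < \<alpha>" "\<alpha> < 1" and c1: "c1 > 1"
    and Klow: "eventually (\<lambda>n. real (K n) \<ge> c1 * ln (real n) / (1 - \<alpha> - ln \<alpha>)) sequentially"
  shows "eventually (\<lambda>n. Fup n (K n) (nat \<lfloor>\<alpha> * real n\<rfloor>)
            \<le> 2 * exp (- ((c1 - 1) / 2) * ln (real n)) + real n * 2 ^ n * exp (- 2 * real n)) sequentially"
proof -
  define A where "A = 1 - \<alpha> - ln \<alpha>"
  define B where "B = 1 + 1 / \<alpha>"
  define e where "e = (c1 - 1) / 2"
  define x0 where "x0 = A * (c1 - 1) / (2 * c1 * B)"
  define \<mu> where "\<mu> = (1 - \<alpha>) / 2"
  have Apos: "A > 0" using A_pos[OF \<alpha>] by (simp add: A_def)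
  have Bpos: "B > 0" using \<alpha> unfolding B_def by (intro add_pos_pos) auto
  have epos: "e > 0" using c1 by (simp add: e_def)
  have x0pos: "x0 > 0" using Apos Bpos c1 by (simp add: x0_def)
  have mupos: "\<mu> > 0" using \<alpha> by (simp add: \<mu>_def)
  have Deq: "A - x0 * B = A * (c1 + 1) / (2 * c1)"
    using Bpos c1 by (simp add: x0_def field_simps)
  have Dpos: "A - x0 * B > 0" using Deq Apos c1 by simp
  have lim1: "((\<lambda>n::nat. exp (- e * ln (real n))) \<longlongrightarrow> 0) sequentially"
    using epos by real_asymp
  have ev_small: "eventually (\<lambda>n. exp (- e * ln (real n)) < 1/2) sequentially"
    using order_tendstoD(2)[OF lim1, of "1/2"] by simp
  have ev_ln: "eventually (\<lambda>n. ln (real n) \<ge> 2 * A / (x0 * \<mu> * c1)) sequentially"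
    by (rule ev_ln_ge)
  have ev_pos: "eventually (\<lambda>n. n \<ge> 1) sequentially" by (rule eventually_ge_at_top)
  show ?thesis
    using ev_n2[OF \<alpha>] Klow ev_small ev_ln ev_pos
  proof eventually_elim
    case (elim n)
    define g where "g = nat \<lfloor>\<alpha> * real n\<rfloor>"
    have npos: "real n > 0" using elim(5) by simp
    have g1: "real g \<le> \<alpha> * real n" using \<alpha> by (simp add: g_def)
    have g2: "\<alpha> * real n < real g + 1" using \<alpha> by (simp add: g_def)
    have Kl: "real (K n) \<ge> c1 * ln (real n) / A" using elim(2) by (simp add: A_def)
    have lnn: "ln (real n) \<ge> 0" using elim(5) by simp
    have "real (K n) * (A - x0 * B) \<ge> c1 * ln (real n) / A * (A - x0 * B)"
      using Kl Dpos by (intro mult_right_mono) auto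
    also have "c1 * ln (real n) / A * (A - x0 * B) = (1 + e) * ln (real n)"
      unfolding Deq using Apos c1 by (simp add: e_def field_simps)
    finally have KD: "real (K n) * (A - x0 * B) \<ge> (1 + e) * ln (real n)" .
    have "real n * exp (- real (K n) * (A - x0 * B)) \<le> real n * exp (- ((1 + e) * ln (real n)))"
      using KD npos by (intro mult_left_mono) auto
    also have "\<dots> = exp (- e * ln (real n))"
    proof -
      have "real n * exp (- ((1 + e) * ln (real n))) = exp (ln (real n)) * exp (- ((1 + e) * ln (real n)))"
        using npos by simp
      also have "\<dots> = exp (ln (real n) + - ((1 + e) * ln (real n)))" by (rule exp_add[symmetric])
      also have "ln (real n) + - ((1 + e) * ln (real n)) = - e * ln (real n)" by (simp add: algebra_simps)
      finally show ?thesis .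
    qed
    finally have dle: "real n * exp (- real (K n) * (A - x0 * B)) \<le> exp (- e * ln (real n))" .
    have d: "real n * exp (- real (K n) * ((1 - \<alpha> - ln \<alpha>) - x0 * (1 + 1/\<alpha>))) \<le> 1/2"
      using dle elim(3) by (simp add: A_def B_def)
    have "x0 * \<mu> * real (K n) \<ge> x0 * \<mu> * (c1 * ln (real n) / A)"
      using Kl x0pos mupos by (intro mult_left_mono) auto
    also have "x0 * \<mu> * (c1 * ln (real n) / A) \<ge> x0 * \<mu> * (c1 * (2 * A / (x0 * \<mu> * c1)) / A)"
      using elim(4) x0pos mupos c1 Apos by (intro mult_left_mono divide_right_mono) auto
    also have "x0 * \<mu> * (c1 * (2 * A / (x0 * \<mu> * c1)) / A) = 2"
      using x0pos mupos c1 Apos by (simp add: field_simps)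
    finally have KL: "x0 * \<mu> * real (K n) \<ge> 2" .
    have "exp (- x0 * ((1 - \<alpha>) / 2) * real n * real (K n)) \<le> exp (- 2 * real n)"
    proof -
      have "2 * real n \<le> x0 * \<mu> * real (K n) * real n" using KL npos by (intro mult_right_mono) auto
      then show ?thesis by (simp add: \<mu>_def algebra_simps)
    qed
    then have Lle: "real n * (2 ^ n * exp (- x0 * ((1 - \<alpha>) / 2) * real n * real (K n))) \<le> real n * 2 ^ n * exp (- 2 * real n)"
      using npos by (simp add: mult_left_mono)
    have "Fup n (K n) g \<le> 2 * (real n * exp (- real (K n) * ((1 - \<alpha> - ln \<alpha>) - x0 * (1 + 1/\<alpha>))))
           + real n * (2 ^ n * exp (- x0 * ((1 - \<alpha>) / 2) * real n * real (K n)))"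
      by (rule Fup_le[OF \<alpha> g1 g2 elim(1) x0pos d])
    also have "\<dots> \<le> 2 * exp (- e * ln (real n)) + real n * 2 ^ n * exp (- 2 * real n)"
      using dle Lle by (simp add: A_def B_def)
    finally show ?case by (simp add: g_def e_def)
  qed
qed





definition Ebd :: "real \<Rightarrow> real \<Rightarrow> nat \<Rightarrow> real" where
  "Ebd \<alpha> C n = 2 * (C * ln (real n)) * (1 + C * ln (real n)) / (\<alpha> * real n)
     + (1 - \<alpha>) * (C * ln (real n)) / (real n - 1)
     + 2 * (1 - \<alpha>) * real n * (C * ln (real n))^2 / (real n - 1)^2"

lemma Epsl_le:
  fixes n K g :: nat and \<alpha> C c2 :: real
  assumes \<alpha>: "0 < \<alpha>" "\<alpha> < 1" and g1: "real g \<le> \<alpha> * real n" and g2: "\<alpha> * real n < real g + 1"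
    and Kg: "K \<le> g" and K3: "K + 3 \<le> n" and m2: "2 \<le> n - g"
    and KA: "real K * (1 - \<alpha> - ln \<alpha>) \<le> c2 * ln (real n)" and KC: "real K \<le> C * ln (real n)"
    and u: "(1 + C * ln (real n)) / (\<alpha> * real n) \<le> 1/2"
    and s: "C * ln (real n) / (real n - 1) \<le> 1/2"
  shows "Epsl n K g \<le> exp (- (ln (1 - \<alpha>) + (1 - c2) * ln (real n) - Ebd \<alpha> C n))
            + (1 / (1 - C * ln (real n) / (real n - 1))^2 - 1)"
proof -
  define m where "m = n - g"
  define L where "L = ln (real n)"
  define u' where "u' = (1 + real K) / (\<alpha> * real n)"
  define s' where "s' = real K / (real n - 1)"
  have npos: "real n > 0" and n3: "real n \<ge> 3" using K3 by auto
  have n1: "real n - 1 > 0" using n3 by simp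
  have L0: "L \<ge> 0" using n3 by (simp add: L_def)
  have K0: "real K \<ge> 0" by simp
  have CL: "real K \<le> C * L" using KC by (simp add: L_def)
  have CL0: "C * L \<ge> 0" using CL K0 by linarith
  have mreal: "real m = real n - real g" using m2 by (simp add: m_def of_nat_diff)
  have mge: "real m \<ge> (1 - \<alpha>) * real n" using mreal g1 by (simp add: algebra_simps)
  have mle: "real m - 1 \<le> (1 - \<alpha>) * real n" using mreal g2 by (simp add: algebra_simps)
  have u'0: "u' \<ge> 0" using \<alpha> npos by (simp add: u'_def)
  have u'le: "u' \<le> (1 + C * L) / (\<alpha> * real n)"
    unfolding u'_def using CL \<alpha> npos by (intro divide_right_mono) auto
  have u'h: "u' \<le> 1/2" using u'le u unfolding L_def by linarith
  have s'0: "s' \<ge> 0" using n1 by (simp add: s'_def)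
  have s'le: "s' \<le> C * L / (real n - 1)"
    unfolding s'_def using CL n1 by (intro divide_right_mono) auto
  have s'h: "s' \<le> 1/2" using s'le s unfolding L_def by linarith
  have r1eq: "rr1 n K = 1 - s'"
  proof -
    have "rr1 n K = real (n - 1 - K) / real (n - 1)" using r_ratios(1)[OF K3] by (simp add: rr1_def)
    also have "\<dots> = 1 - s'" using K3 n1 by (simp add: s'_def of_nat_diff field_simps)
    finally show ?thesis .
  qed
  have r1pos: "rr1 n K > 0" using r1eq s'h by simp
  have F1: "real m \<ge> exp (ln (1 - \<alpha>) + L)"
    using mge \<alpha> npos by (simp add: exp_add L_def)
  have F2: "rho n K g \<ge> exp (real K * ln \<alpha> - 2 * real K * u')"
  proof -
    have gn: "g \<le> n - 1" using g1 \<alpha> m2 by linarith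
    have "rho n K g \<ge> ((real g - real K) / real (n - 1)) ^ K"
      unfolding rho_def using Kg gn by (rule binom_ratio_ge)
    moreover have "(real g - real K) / real (n - 1) \<ge> \<alpha> * (1 - u')"
    proof -
      have gK: "real g - real K \<ge> 0" using Kg by simp
      have "\<alpha> * (1 - u') = (\<alpha> * real n - 1 - real K) / real n"
        using \<alpha> npos by (simp add: u'_def field_simps)
      also have "\<dots> \<le> (real g - real K) / real n"
        using g2 npos by (intro divide_right_mono) auto
      also have "\<dots> \<le> (real g - real K) / real (n - 1)"
        using gK n1 K3 by (intro divide_left_mono) (auto simp: of_nat_diff)
      finally show ?thesis .
    qed
    moreover have au: "\<alpha> * (1 - u') > 0" using \<alpha> u'h by simp
    ultimately have "rho n K g \<ge> (\<alpha> * (1 - u')) ^ K"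
      by (meson order_trans power_mono less_imp_le)
    also have "(\<alpha> * (1 - u')) ^ K = exp (real K * (ln \<alpha> + ln (1 - u')))"
      using au \<alpha> u'h by (simp add: pow_as_exp ln_mult)
    also have "exp (real K * (ln \<alpha> + ln (1 - u'))) \<ge> exp (real K * ln \<alpha> - 2 * real K * u')"
    proof -
      have "ln (1 - u') \<ge> - u' - 2 * u'^2" using ln_one_minus_pos_lower_bound[OF u'0 u'h] .
      moreover have "2 * u'^2 \<le> u'"
      proof -
        have "u' * (2 * u') \<le> u' * 1" using u'0 u'h by (intro mult_left_mono) auto
        then show ?thesis by (simp add: power2_eq_square algebra_simps)
      qed
      ultimately have "ln (1 - u') \<ge> - 2 * u'" by linarith
      then have "real K * (ln \<alpha> + ln (1 - u')) \<ge> real K * (ln \<alpha> - 2 * u')"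
        by (intro mult_left_mono) auto
      then show ?thesis by (simp add: algebra_simps)
    qed
    finally show ?thesis .
  qed
  have F3: "rr1 n K ^ (m - 1) \<ge> exp (- ((1 - \<alpha>) * real n * (s' + 2 * s'^2)))"
  proof -
    have lnr: "ln (rr1 n K) \<ge> - s' - 2 * s'^2" using ln_one_minus_pos_lower_bound[OF s'0 s'h] r1eq by simp
    have lnr0: "ln (rr1 n K) \<le> 0" using r1eq s'0 r1pos by simp
    have m1: "real (m - 1) \<le> (1 - \<alpha>) * real n" using mle m2 by (simp add: m_def of_nat_diff)
    have h1: "real (m - 1) * ln (rr1 n K) \<ge> (1 - \<alpha>) * real n * ln (rr1 n K)"
      using m1 lnr0 by (intro mult_right_mono_neg) auto
    have h2: "(1 - \<alpha>) * real n * ln (rr1 n K) \<ge> (1 - \<alpha>) * real n * (- s' - 2 * s'^2)"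
      using lnr \<alpha> npos by (intro mult_left_mono) auto
    have "rr1 n K ^ (m - 1) = exp (real (m - 1) * ln (rr1 n K))" using r1pos by (rule pow_as_exp)
    moreover have "exp (real (m - 1) * ln (rr1 n K)) \<ge> exp ((1 - \<alpha>) * real n * (- s' - 2 * s'^2))"
      using h1 h2 by simp
    ultimately show ?thesis by (simp add: algebra_simps)
  qed
  define \<Phi> where "\<Phi> = ln (1 - \<alpha>) + (1 - c2) * ln (real n) - Ebd \<alpha> C n"
  have Xsum: "(ln (1 - \<alpha>) + L) + (real K * ln \<alpha> - 2 * real K * u') + (- ((1 - \<alpha>) * real n * (s' + 2 * s'^2))) \<ge> \<Phi>"
  proof -
    have ns: "real n * s' = real K + s'"
      using n1 by (simp add: s'_def field_simps)
    have e1: "2 * real K * u' \<le> 2 * (C * L) * (1 + C * L) / (\<alpha> * real n)"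
    proof -
      have "2 * real K * u' = 2 * real K * (1 + real K) / (\<alpha> * real n)" by (simp add: u'_def)
      also have "\<dots> \<le> 2 * (C * L) * (1 + C * L) / (\<alpha> * real n)"
        using CL K0 \<alpha> npos by (intro divide_right_mono mult_mono) auto
      finally show ?thesis .
    qed
    have e2: "(1 - \<alpha>) * s' \<le> (1 - \<alpha>) * (C * L) / (real n - 1)"
    proof -
      have "(1 - \<alpha>) * s' \<le> (1 - \<alpha>) * (C * L / (real n - 1))"
        using s'le \<alpha> by (intro mult_left_mono) auto
      then show ?thesis by simp
    qed
    have e3: "(1 - \<alpha>) * real n * (2 * s'^2) \<le> 2 * (1 - \<alpha>) * real n * (C * L)^2 / (real n - 1)^2"
    proof -
      have "s'^2 \<le> (C * L / (real n - 1))^2" using s'0 s'le by (intro power_mono) auto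
      then have "(1 - \<alpha>) * real n * (2 * s'^2) \<le> (1 - \<alpha>) * real n * (2 * (C * L / (real n - 1))^2)"
        using \<alpha> npos by (intro mult_left_mono) auto
      also have "\<dots> = 2 * (1 - \<alpha>) * real n * (C * L)^2 / (real n - 1)^2"
        by (simp add: power_divide mult_ac)
      finally show ?thesis .
    qed
    have "(ln (1 - \<alpha>) + L) + (real K * ln \<alpha> - 2 * real K * u') + (- ((1 - \<alpha>) * real n * (s' + 2 * s'^2)))
        = ln (1 - \<alpha>) + L - real K * (1 - \<alpha> - ln \<alpha>) - 2 * real K * u' - (1 - \<alpha>) * s'
          - (1 - \<alpha>) * real n * (2 * s'^2)"
      using ns by (simp add: algebra_simps)
    also have "\<dots> \<ge> \<Phi>"
      using KA e1 e2 e3 unfolding \<Phi>_def Ebd_def L_def by (simp add: algebra_simps)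
    finally show ?thesis .
  qed
  have mp: "real m * pp1 n K g \<ge> exp \<Phi>"
  proof -
    have "exp \<Phi> \<le> exp ((ln (1 - \<alpha>) + L) + (real K * ln \<alpha> - 2 * real K * u') + (- ((1 - \<alpha>) * real n * (s' + 2 * s'^2))))"
      using Xsum by simp
    also have "\<dots> = exp (ln (1 - \<alpha>) + L) * exp (real K * ln \<alpha> - 2 * real K * u') * exp (- ((1 - \<alpha>) * real n * (s' + 2 * s'^2)))"
      by (simp only: exp_add)
    also have "\<dots> \<le> real m * rho n K g * rr1 n K ^ (m - 1)"
    proof -
      have "rho n K g \<ge> 0" by (simp add: rho_def)
      then show ?thesis using F1 F2 F3 by (intro mult_mono) auto
    qed
    finally show ?thesis by (simp add: pp1_def m_def mult.assoc)
  qed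
  have t1: "1 / (real (n - g) * pp1 n K g) \<le> exp (- \<Phi>)"
  proof -
    have "1 / (real m * pp1 n K g) \<le> 1 / exp \<Phi>"
    proof -
      have "exp \<Phi> > 0" by simp
      then have "real m * pp1 n K g > 0" using mp by linarith
      have "inverse (real m * pp1 n K g) \<le> inverse (exp \<Phi>)"
        using le_imp_inverse_le[OF mp \<open>exp \<Phi> > 0\<close>] .
      then show ?thesis by (simp add: inverse_eq_divide)
    qed
    then show ?thesis by (simp add: m_def exp_minus inverse_eq_divide)
  qed
  have t2: "1 / (rr1 n K)^2 \<le> 1 / (1 - C * ln (real n) / (real n - 1))^2"
  proof -
    obtain w where w: "w = 1 - C * ln (real n) / (real n - 1)" by blast
    have wr: "w \<le> rr1 n K" using r1eq s'le w unfolding L_def by linarith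
    have w0: "w > 0" using s w by linarith
    have "w^2 \<le> (rr1 n K)^2" using wr w0 by (intro power_mono) auto
    moreover have "w^2 > 0" using w0 by simp
    ultimately have "inverse ((rr1 n K)^2) \<le> inverse (w^2)" by (rule le_imp_inverse_le)
    then show ?thesis using w by (simp add: inverse_eq_divide)
  qed
  show ?thesis using t1 t2 by (simp add: Epsl_def \<Phi>_def)
qed





lemma K_bounds:
  fixes \<alpha> c c' :: real and K :: "nat \<Rightarrow> nat"
  assumes \<alpha>: "0 < \<alpha>" "\<alpha> < 1" and c: "0 < c"
    and equiv: "(\<lambda>n. real (K n)) \<sim>[at_top] (\<lambda>n. c * (ln (real n) / (1 - \<alpha> - ln \<alpha>)))"
  shows "c' < c \<Longrightarrow> eventually (\<lambda>n. real (K n) \<ge> c' * ln (real n) / (1 - \<alpha> - ln \<alpha>)) sequentially"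
    and "c < c' \<Longrightarrow> eventually (\<lambda>n. real (K n) \<le> c' * ln (real n) / (1 - \<alpha> - ln \<alpha>)) sequentially"
proof -
  define A where "A = 1 - \<alpha> - ln \<alpha>"
  have Apos: "A > 0" using A_pos[OF \<alpha>] by (simp add: A_def)
  have fpos: "eventually (\<lambda>n. c * (ln (real n) / A) > 0) sequentially"
  proof -
    have "eventually (\<lambda>n. ln (real n) \<ge> 1) sequentially" by (rule ev_ln_ge)
    then show ?thesis by eventually_elim (use c Apos in auto)
  qed
  have lim: "((\<lambda>n. real (K n) / (c * (ln (real n) / A))) \<longlongrightarrow> 1) sequentially"
  proof (rule asymp_equivD_strong)
    show "(\<lambda>n. real (K n)) \<sim>[sequentially] (\<lambda>n. c * (ln (real n) / A))" using equiv by (simp add: A_def)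
    show "\<forall>\<^sub>F x in sequentially. real (K x) \<noteq> 0 \<or> c * (ln (real x) / A) \<noteq> 0"
      using fpos by eventually_elim auto
  qed
  {
    assume c': "c' < c"
    have "eventually (\<lambda>n. real (K n) / (c * (ln (real n) / A)) > c' / c) sequentially"
      using order_tendstoD(1)[OF lim] c c' by simp
    then show "eventually (\<lambda>n. real (K n) \<ge> c' * ln (real n) / (1 - \<alpha> - ln \<alpha>)) sequentially"
      using fpos
    proof eventually_elim
      case (elim n)
      define f where "f = c * (ln (real n) / A)"
      have f0: "f > 0" using elim(2) by (simp add: f_def)
      have "c' / c * f \<le> (real (K n) / f) * f"
        using elim(1) f0 by (intro mult_right_mono) (auto simp: f_def)
      also have "\<dots> = real (K n)" using f0 by simp
      finally have "c' / c * f \<le> real (K n)" .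
      moreover have "c' / c * f = c' * ln (real n) / (1 - \<alpha> - ln \<alpha>)" using c by (simp add: f_def A_def)
      ultimately show ?case by simp
    qed
  }
  {
    assume c': "c < c'"
    have "eventually (\<lambda>n. real (K n) / (c * (ln (real n) / A)) < c' / c) sequentially"
      using order_tendstoD(2)[OF lim] c c' by simp
    then show "eventually (\<lambda>n. real (K n) \<le> c' * ln (real n) / (1 - \<alpha> - ln \<alpha>)) sequentially"
      using fpos
    proof eventually_elim
      case (elim n)
      define f where "f = c * (ln (real n) / A)"
      have f0: "f > 0" using elim(2) by (simp add: f_def)
      have "real (K n) = (real (K n) / f) * f" using f0 by simp
      also have "\<dots> \<le> c' / c * f"
        using elim(1) f0 by (intro mult_right_mono) (auto simp: f_def)
      finally have "real (K n) \<le> c' / c * f" .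
      moreover have "c' / c * f = c' * ln (real n) / (1 - \<alpha> - ln \<alpha>)" using c by (simp add: f_def A_def)
      ultimately show ?case by simp
    qed
  }
qed


lemma DD_ne: "g \<le> n \<Longrightarrow> DD n g \<noteq> {}"
proof -
  assume "g \<le> n"
  then have "{1..g} \<in> DD n g" by (auto simp: DD_def)
  then show ?thesis by blast
qed

lemma GG_ne: "K < n \<Longrightarrow> GG n K \<noteq> {}"
  using card_GG_pos[of K n] by auto

lemma g_le_n: "0 < \<alpha> \<Longrightarrow> \<alpha> < 1 \<Longrightarrow> nat \<lfloor>\<alpha> * real n\<rfloor> \<le> n"
proof -
  assume a: "0 < \<alpha>" "\<alpha> < 1"
  have "\<alpha> * real n \<le> real n" using a by (simp add: mult_left_le_one_le)
  then have "\<lfloor>\<alpha> * real n\<rfloor> \<le> int n" by linarith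
  then show ?thesis by simp
qed

lemma ev_log_lt: "D > 0 \<Longrightarrow> eventually (\<lambda>n::nat. D * ln (real n) + 3 \<le> real n) sequentially"
  by real_asymp

lemma prob_not: "measure_pmf.prob M {\<omega>. P \<omega>} = 1 - measure_pmf.prob M {\<omega>. \<not> P \<omega>}"
proof -
  have e: "{\<omega>. P \<omega>} = space (measure_pmf M) - {\<omega>. \<not> P \<omega>}" by auto
  have "measure_pmf.prob M (space (measure_pmf M) - {\<omega>. \<not> P \<omega>}) = 1 - measure_pmf.prob M {\<omega>. \<not> P \<omega>}"
    by (rule measure_pmf.prob_compl) simp
  then show ?thesis by (simp only: e)
qed

lemma case_gt:
  fixes \<alpha> c :: real and K :: "nat \<Rightarrow> nat"
  assumes \<alpha>: "0 < \<alpha>" "\<alpha> < 1" and c: "1 < c"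
    and equiv: "(\<lambda>n. real (K n)) \<sim>[at_top] (\<lambda>n. c * (ln (real n) / (1 - \<alpha> - ln \<alpha>)))"
  shows "(\<lambda>n. P_conn n (K n) (nat \<lfloor>\<alpha> * real n\<rfloor>)) \<longlonglongrightarrow> 1"
proof -
  define A where "A = 1 - \<alpha> - ln \<alpha>"
  have Apos: "A > 0" using A_pos[OF \<alpha>] by (simp add: A_def)
  define c1 where "c1 = (c + 1) / 2"
  have c1: "c1 > 1" "c1 < c" using c by (auto simp: c1_def)
  have Klow: "eventually (\<lambda>n. real (K n) \<ge> c1 * ln (real n) / (1 - \<alpha> - ln \<alpha>)) sequentially"
    using K_bounds(1)[OF \<alpha> _ equiv c1(2)] c by simp
  have Kup: "eventually (\<lambda>n. real (K n) \<le> (c + 1) * ln (real n) / (1 - \<alpha> - ln \<alpha>)) sequentially"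
    using K_bounds(2)[OF \<alpha> _ equiv, of "c + 1"] c by simp
  define B where "B n = 2 * exp (- ((c1 - 1) / 2) * ln (real n)) + real n * 2 ^ n * exp (- 2 * real n)" for n :: nat
  have Blim: "B \<longlonglongrightarrow> 0"
  proof -
    have e: "(c1 - 1) / 2 > 0" using c1 by simp
    show ?thesis unfolding B_def using e by real_asymp
  qed
  have cA: "(c + 1) / A > 0" using c Apos by simp
  have ev: "eventually (\<lambda>n. 1 - B n \<le> P_conn n (K n) (nat \<lfloor>\<alpha> * real n\<rfloor>)) sequentially"
    using Fup_ev[OF \<alpha> c1(1) Klow] Kup ev_log_lt[OF cA]
  proof eventually_elim
    case (elim n)
    define g where "g = nat \<lfloor>\<alpha> * real n\<rfloor>"
    have Kn: "K n < n"
    proof -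
      have "real (K n) \<le> (c + 1) / A * ln (real n)" using elim(2) by (simp add: A_def)
      then show ?thesis using elim(3) by linarith
    qed
    have gn: "g \<le> n" using g_le_n[OF \<alpha>] by (simp add: g_def)
    have "measure_pmf.prob (pmf_of_set (kout_space n (K n) g))
        {\<omega>. \<not> connected_on ({1..n} - snd \<omega>) (kout_adj (fst \<omega>))} \<le> Fup n (K n) g"
      using avg_bound[OF GG_ne[OF Kn] DD_ne[OF gn], of "\<lambda>\<Gamma> D. \<not> connected_on ({1..n} - D) (kout_adj \<Gamma>)" "Fup n (K n) g"]
        fixedD_upper[OF _ Kn] by simp
    then have "P_conn n (K n) g \<ge> 1 - Fup n (K n) g"
      unfolding P_conn_def by (subst prob_not) simp
    then show ?case using elim(1) by (simp add: B_def g_def)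
  qed
  have ev2: "eventually (\<lambda>n. P_conn n (K n) (nat \<lfloor>\<alpha> * real n\<rfloor>) \<le> 1) sequentially"
    by (simp add: P_conn_def)
  have lim1: "(\<lambda>n. 1 - B n) \<longlonglongrightarrow> 1" using tendsto_diff[OF tendsto_const Blim, of 1] by simp
  show ?thesis by (rule tendsto_sandwich[OF ev ev2 lim1 tendsto_const])
qed


lemma ev_lt_aux:
  fixes C \<alpha> :: real
  assumes "C > 0" "\<alpha> > 0"
  shows "eventually (\<lambda>n::nat. C * ln (real n) + 1 \<le> \<alpha> * real n) sequentially"
    and "eventually (\<lambda>n::nat. (1 + C * ln (real n)) / (\<alpha> * real n) \<le> 1/2) sequentially"
    and "eventually (\<lambda>n::nat. C * ln (real n) / (real n - 1) \<le> 1/2) sequentially"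
  using assms by real_asymp+

lemma B2_lim:
  fixes \<alpha> C c2 :: real
  assumes "0 < \<alpha>" "\<alpha> < 1" "C > 0" "c2 < 1"
  shows "(\<lambda>n. exp (- (ln (1 - \<alpha>) + (1 - c2) * ln (real n) - Ebd \<alpha> C n))
            + (1 / (1 - C * ln (real n) / (real n - 1))^2 - 1)) \<longlonglongrightarrow> 0"
  using assms unfolding Ebd_def by real_asymp

lemma case_lt:
  fixes \<alpha> c :: real and K :: "nat \<Rightarrow> nat"
  assumes \<alpha>: "0 < \<alpha>" "\<alpha> < 1" and c: "0 < c" "c < 1"
    and equiv: "(\<lambda>n. real (K n)) \<sim>[at_top] (\<lambda>n. c * (ln (real n) / (1 - \<alpha> - ln \<alpha>)))"
  shows "(\<lambda>n. P_conn n (K n) (nat \<lfloor>\<alpha> * real n\<rfloor>)) \<longlonglongrightarrow> 0"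
proof -
  define A where "A = 1 - \<alpha> - ln \<alpha>"
  have Apos: "A > 0" using A_pos[OF \<alpha>] by (simp add: A_def)
  define c2 where "c2 = (c + 1) / 2"
  have c2: "c < c2" "c2 < 1" "c2 > 0" using c by (auto simp: c2_def)
  define C where "C = c2 / A"
  have Cpos: "C > 0" using c2 Apos by (simp add: C_def)
  have Kup: "eventually (\<lambda>n. real (K n) \<le> c2 * ln (real n) / (1 - \<alpha> - ln \<alpha>)) sequentially"
    using K_bounds(2)[OF \<alpha> c(1) equiv c2(1)] .
  define B where "B n = exp (- (ln (1 - \<alpha>) + (1 - c2) * ln (real n) - Ebd \<alpha> C n))
            + (1 / (1 - C * ln (real n) / (real n - 1))^2 - 1)" for n :: nat
  have Blim: "B \<longlonglongrightarrow> 0" unfolding B_def by (rule B2_lim[OF \<alpha> Cpos c2(2)])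
  have ev: "eventually (\<lambda>n. P_conn n (K n) (nat \<lfloor>\<alpha> * real n\<rfloor>) \<le> B n) sequentially"
    using Kup ev_lt_aux[OF Cpos \<alpha>(1)] ev_log_lt[OF Cpos] ev_n2[OF \<alpha>] ev_ln_ge[of 0]
  proof eventually_elim
    case (elim n)
    define g where "g = nat \<lfloor>\<alpha> * real n\<rfloor>"
    have g1: "real g \<le> \<alpha> * real n" using \<alpha> by (simp add: g_def)
    have g2: "\<alpha> * real n < real g + 1" using \<alpha> by (simp add: g_def)
    have lnn: "ln (real n) \<ge> 0" using elim(7) by simp
    have KC: "real (K n) \<le> C * ln (real n)" using elim(1) by (simp add: C_def A_def)
    have KA: "real (K n) * (1 - \<alpha> - ln \<alpha>) \<le> c2 * ln (real n)"
      using elim(1) Apos by (simp add: A_def pos_le_divide_eq[symmetric] mult.commute)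
    have Kg: "K n \<le> g" using KC elim(2) g2 by linarith
    have K3: "K n + 3 \<le> n" using KC elim(5) by linarith
    have m2: "2 \<le> n - g"
    proof -
      have "real g + 2 \<le> real n" using g1 elim(6) by (simp add: algebra_simps)
      then show ?thesis by linarith
    qed
    have Kn: "K n < n" using K3 by simp
    have gn: "g \<le> n" using g_le_n[OF \<alpha>] by (simp add: g_def)
    have "P_conn n (K n) g \<le> Epsl n (K n) g"
      unfolding P_conn_def
      using avg_bound[OF GG_ne[OF Kn] DD_ne[OF gn], of "\<lambda>\<Gamma> D. connected_on ({1..n} - D) (kout_adj \<Gamma>)" "Epsl n (K n) g"]
        fixedD_lower[OF _ K3 Kg m2] by simp
    also have "\<dots> \<le> B n"
      unfolding B_def by (rule Epsl_le[OF \<alpha> g1 g2 Kg K3 m2 KA KC elim(3) elim(4)])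
    finally show ?case by (simp add: g_def)
  qed
  have ev0: "eventually (\<lambda>n. 0 \<le> P_conn n (K n) (nat \<lfloor>\<alpha> * real n\<rfloor>)) sequentially"
    by (simp add: P_conn_def)
  show ?thesis by (rule tendsto_sandwich[OF ev0 ev tendsto_const Blim])
qed



theorem theorem3p1:
  fixes \<alpha> c :: real and K :: "nat \<Rightarrow> nat"
  assumes "0 < \<alpha>" "\<alpha> < 1" "0 < c"
    and "(\<lambda>n. real (K n)) \<sim>[at_top] (\<lambda>n. c * (ln (real n) / (1 - \<alpha> - ln \<alpha>)))"
  shows "(c > 1 \<longrightarrow> (\<lambda>n. P_conn n (K n) (nat \<lfloor>\<alpha> * real n\<rfloor>)) \<longlonglongrightarrow> 1)
       \<and> (c < 1 \<longrightarrow> (\<lambda>n. P_conn n (K n) (nat \<lfloor>\<alpha> * real n\<rfloor>)) \<longlonglongrightarrow> 0)"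
  using case_gt[OF assms(1,2) _ assms(4)] case_lt[OF assms(1,2,3) _ assms(4)] by blast

end
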